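(* Let $X_1,X_2,\dots$ be independent nonnegative random variables such that $X_2,X_3,\dots$ are i.i.d. with $p:=\mathbb{P}(X_k>0)\in(0,1]$ for $k\ge2$. Let $\mathfrak{X}_2,\mathfrak{X}_3,\dots$ be i.i.d., independent of $(X_k)$, with $\mathbb{P}(\mathfrak{X}_k\in U)=\mathbb{P}(X_k\in U\mid X_k>0)$ for Borel $U$, and set $\mathfrak{S}_k=\mathfrak{X}_2+\dots+\mathfrak{X}_{k+1}$ and $S_n=X_1+\dots+X_n$. For $k\ge1$ let $I_k=\inf\{x\ge0:\mathbb{P}(X_k\le x)>0\}$. Suppose $I_2=0$, and let $L>0$ be such that $\mathbb{P}(X_1+\mathfrak{X}_2\le L)>0$. Define $K^\ast=\sup\{k\ge1:\mathbb{P}(X_1+\mathfrak{S}_k\le L)>0\}$. Then: (1) if $K^\ast=\infty$, then for every $\delta>0$, $\lim_{n\to\infty}\mathbb{P}(X_1>I_1+\delta\mid S_n\le L)=0$; (2) if $K^\ast<\infty$, then for every $\delta>0$, $\lim_{n\to\infty}\mathbb{P}(X_1>I_1+\delta\mid S_n\le L)=\mathbb{P}(X_1>I_1+\delta\mid X_1+\mathfrak{S}_{K^\ast}\le L)$. *)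

theory Defs
  imports "HOL-Probability.Probability" "HOL-Library.Extended_Nat"
begin

definition lower_end :: "'a measure \<Rightarrow> ('a \<Rightarrow> real) \<Rightarrow> real" where
  "lower_end M Z = Inf {x. x \<ge> 0 \<and> measure M {\<omega> \<in> space M. Z \<omega> \<le> x} > 0}"

definition frakS :: "(nat \<Rightarrow> 'a \<Rightarrow> real) \<Rightarrow> nat \<Rightarrow> 'a \<Rightarrow> real" where
  "frakS Y k \<omega> = (\<Sum>j\<in>{2..k+1}. Y j \<omega>)"

definition partS :: "(nat \<Rightarrow> 'a \<Rightarrow> real) \<Rightarrow> nat \<Rightarrow> 'a \<Rightarrow> real" where
  "partS X n \<omega> = (\<Sum>j\<in>{1..n}. X j \<omega>)"

definition Kstar :: "'a measure \<Rightarrow> (nat \<Rightarrow> 'a \<Rightarrow> real) \<Rightarrow> (nat \<Rightarrow> 'a \<Rightarrow> real) \<Rightarrow> real \<Rightarrow> enat" where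
  "Kstar M X Y L = Sup (enat ` {k. k \<ge> 1 \<and>
      measure M {\<omega> \<in> space M. X 1 \<omega> + frakS Y k \<omega> \<le> L} > 0})"

end

theory Submission
  imports Defs
begin
lemma (in prob_space) indep_pair_nn_integral:
  assumes ind: "indep_var S U T V" and H: "case_prod H \<in> borel_measurable (S \<Otimes>\<^sub>M T)"
  shows "(\<integral>\<^sup>+\<omega>. H (U \<omega>) (V \<omega>) \<partial>M) = (\<integral>\<^sup>+\<omega>. (\<integral>\<^sup>+v. H (U \<omega>) v \<partial>distr M T V) \<partial>M)"
proof -
  have rv: "random_variable S U" "random_variable T V"
    using ind by (auto dest: indep_var_rv1 indep_var_rv2)
  have eq: "distr M S U \<Otimes>\<^sub>M distr M T V = distr M (S \<Otimes>\<^sub>M T) (\<lambda>x. (U x, V x))"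
    using ind indep_var_distribution_eq by blast
  interpret SU: prob_space "distr M S U" by (rule prob_space_distr) (rule rv)
  interpret TV: prob_space "distr M T V" by (rule prob_space_distr) (rule rv)
  interpret P: pair_sigma_finite "distr M S U" "distr M T V" ..
  have H': "case_prod H \<in> borel_measurable (distr M S U \<Otimes>\<^sub>M distr M T V)"
    using H by (simp cong: measurable_cong_sets)
  have "(\<integral>\<^sup>+\<omega>. H (U \<omega>) (V \<omega>) \<partial>M) = (\<integral>\<^sup>+z. case_prod H z \<partial>distr M (S \<Otimes>\<^sub>M T) (\<lambda>x. (U x, V x)))"
    using H rv by (subst nn_integral_distr) (auto intro: measurable_Pair)
  also have "\<dots> = (\<integral>\<^sup>+z. case_prod H z \<partial>(distr M S U \<Otimes>\<^sub>M distr M T V))"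
    by (simp add: eq)
  also have "\<dots> = (\<integral>\<^sup>+u. (\<integral>\<^sup>+v. H u v \<partial>distr M T V) \<partial>distr M S U)"
    using TV.nn_integral_fst[OF H'] by simp
  also have "\<dots> = (\<integral>\<^sup>+\<omega>. (\<integral>\<^sup>+v. H (U \<omega>) v \<partial>distr M T V) \<partial>M)"
  proof -
    have m: "(\<lambda>u. \<integral>\<^sup>+ v. H u v \<partial>distr M T V) \<in> borel_measurable S"
      using TV.borel_measurable_nn_integral[OF H'] by (simp cong: measurable_cong_sets)
    show ?thesis using m rv by (subst nn_integral_distr) auto
  qed
  finally show ?thesis .
qed

lemma (in prob_space) indep_one_nn_integral:
  assumes ind: "indep_vars (\<lambda>_. borel) Z I" and A: "A \<subseteq> I" "i \<in> I" "i \<notin> A"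
    and H: "case_prod H \<in> borel_measurable (PiM A (\<lambda>_. borel) \<Otimes>\<^sub>M borel)"
  shows "(\<integral>\<^sup>+\<omega>. H (restrict (\<lambda>j. Z j \<omega>) A) (Z i \<omega>) \<partial>M)
       = (\<integral>\<^sup>+\<omega>. (\<integral>\<^sup>+v. H (restrict (\<lambda>j. Z j \<omega>) A) v \<partial>distr M borel (Z i)) \<partial>M)"
proof -
  have I: "indep_var (PiM A (\<lambda>_. borel)) (\<lambda>\<omega>. restrict (\<lambda>j. Z j \<omega>) A) (PiM {i} (\<lambda>_. borel)) (\<lambda>\<omega>. restrict (\<lambda>j. Z j \<omega>) {i})"
    using A by (intro indep_var_restrict[OF ind]) auto
  have rvi: "random_variable borel (Z i)" using ind A by (auto simp: indep_vars_def)
  have rvA: "random_variable (PiM A (\<lambda>_. borel)) (\<lambda>\<omega>. restrict (\<lambda>j. Z j \<omega>) A)"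
    using I by (rule indep_var_rv1)
  have rv1: "random_variable (PiM {i} (\<lambda>_. borel)) (\<lambda>\<omega>. restrict (\<lambda>j. Z j \<omega>) {i})"
    using I by (rule indep_var_rv2)
  have H2: "(\<lambda>(u, f). H u (f i)) \<in> borel_measurable (PiM A (\<lambda>_. borel) \<Otimes>\<^sub>M PiM {i} (\<lambda>_. borel))"
  proof -
    have "(\<lambda>(u, f). (u, f i)) \<in> measurable (PiM A (\<lambda>_. borel) \<Otimes>\<^sub>M PiM {i} (\<lambda>_. borel)) (PiM A (\<lambda>_. borel) \<Otimes>\<^sub>M borel)"
      by measurable
    from measurable_comp[OF this H] show ?thesis by (simp add: comp_def case_prod_beta')
  qed
  have "(\<integral>\<^sup>+\<omega>. H (restrict (\<lambda>j. Z j \<omega>) A) (Z i \<omega>) \<partial>M)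
      = (\<integral>\<^sup>+\<omega>. (\<lambda>u f. H u (f i)) (restrict (\<lambda>j. Z j \<omega>) A) (restrict (\<lambda>j. Z j \<omega>) {i}) \<partial>M)" by simp
  also have "\<dots> = (\<integral>\<^sup>+\<omega>. (\<integral>\<^sup>+f. H (restrict (\<lambda>j. Z j \<omega>) A) (f i) \<partial>distr M (PiM {i} (\<lambda>_. borel)) (\<lambda>\<omega>. restrict (\<lambda>j. Z j \<omega>) {i})) \<partial>M)"
    by (rule indep_pair_nn_integral[OF I]) (use H2 in simp)
  also have "\<dots> = (\<integral>\<^sup>+\<omega>. (\<integral>\<^sup>+v. H (restrict (\<lambda>j. Z j \<omega>) A) v \<partial>distr M borel (Z i)) \<partial>M)"
  proof (rule nn_integral_cong)
    fix \<omega> assume \<omega>: "\<omega> \<in> space M"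
    have u: "restrict (\<lambda>j. Z j \<omega>) A \<in> space (PiM A (\<lambda>_. borel))"
      using measurable_space[OF rvA \<omega>] .
    have Hu: "H (restrict (\<lambda>j. Z j \<omega>) A) \<in> borel_measurable borel"
      using measurable_Pair2[OF H u] by simp
    have "(\<integral>\<^sup>+f. H (restrict (\<lambda>j. Z j \<omega>) A) (f i) \<partial>distr M (PiM {i} (\<lambda>_. borel)) (\<lambda>\<omega>. restrict (\<lambda>j. Z j \<omega>) {i}))
        = (\<integral>\<^sup>+\<omega>'. H (restrict (\<lambda>j. Z j \<omega>) A) (Z i \<omega>') \<partial>M)"
      using Hu rv1 by (subst nn_integral_distr) auto
    also have "\<dots> = (\<integral>\<^sup>+v. H (restrict (\<lambda>j. Z j \<omega>) A) v \<partial>distr M borel (Z i))"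
      using Hu rvi by (subst nn_integral_distr) auto
    finally show "(\<integral>\<^sup>+f. H (restrict (\<lambda>j. Z j \<omega>) A) (f i) \<partial>distr M (PiM {i} (\<lambda>_. borel)) (\<lambda>\<omega>. restrict (\<lambda>j. Z j \<omega>) {i}))
        = (\<integral>\<^sup>+v. H (restrict (\<lambda>j. Z j \<omega>) A) v \<partial>distr M borel (Z i))" .
  qed
  finally show ?thesis .
qed

locale setting = prob_space M for M :: "'a measure" +
  fixes X Y :: "nat \<Rightarrow> 'a \<Rightarrow> real"
  assumes indep: "indep_vars (\<lambda>_. borel)
          (\<lambda>i. case i of Inl k \<Rightarrow> X k | Inr k \<Rightarrow> Y k)
          (Inl ` {1..} \<union> Inr ` {2..})"
    and nonneg: "\<And>k \<omega>. k \<ge> 1 \<Longrightarrow> \<omega> \<in> space M \<Longrightarrow> X k \<omega> \<ge> 0"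
    and X_id: "\<And>k. k \<ge> 2 \<Longrightarrow> distr M borel (X k) = distr M borel (X 2)"
    and p_pos: "measure M {\<omega> \<in> space M. X 2 \<omega> > 0} > 0"
    and Y_id: "\<And>k. k \<ge> 2 \<Longrightarrow> distr M borel (Y k) = distr M borel (Y 2)"
    and Y_law: "\<And>k U. k \<ge> 2 \<Longrightarrow> U \<in> sets borel \<Longrightarrow>
          measure M {\<omega> \<in> space M. Y k \<omega> \<in> U} =
          cond_prob M (\<lambda>\<omega>. X k \<omega> \<in> U) (\<lambda>\<omega>. X k \<omega> > 0)"
begin

definition "Z = (\<lambda>i. case i of Inl k \<Rightarrow> X k | Inr k \<Rightarrow> Y k)"
definition "IS = Inl ` {1..} \<union> Inr ` {(2::nat)..}"
definition "pp = prob {\<omega> \<in> space M. X 2 \<omega> > 0}"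
definition "mu = distr M borel (X 2)"
definition "nu = distr M borel (Y 2)"

lemma indepZ: "indep_vars (\<lambda>_. borel) Z IS"
  using indep unfolding Z_def IS_def .

lemma Z_simps[simp]: "Z (Inl k) = X k" "Z (Inr k) = Y k" by (auto simp: Z_def)

lemma rvZ: "i \<in> IS \<Longrightarrow> Z i \<in> borel_measurable M"
  using indepZ unfolding indep_vars_def2 by blast

lemma rvX[measurable]: "1 \<le> k \<Longrightarrow> X k \<in> borel_measurable M"
  using rvZ[of "Inl k"] by (simp add: IS_def)

lemma rvY[measurable]: "2 \<le> k \<Longrightarrow> Y k \<in> borel_measurable M"
  using rvZ[of "Inr k"] by (simp add: IS_def)

lemma rvX2[measurable]: "X 2 \<in> borel_measurable M" by (rule rvX) simp
lemma rvY2[measurable]: "Y 2 \<in> borel_measurable M" by (rule rvY) simp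
lemma rvX1[measurable]: "X 1 \<in> borel_measurable M" by (rule rvX) simp

lemma pp_pos: "pp > 0" using p_pos by (simp add: pp_def)
lemma pp_le1: "pp \<le> 1" unfolding pp_def by (rule prob_le_1)

lemma mu_prob: "prob_space mu" unfolding mu_def by (rule prob_space_distr) measurable
lemma nu_prob: "prob_space nu" unfolding nu_def by (rule prob_space_distr) measurable

lemma distrX: "2 \<le> k \<Longrightarrow> distr M borel (X k) = mu" unfolding mu_def by (rule X_id)
lemma distrY: "2 \<le> k \<Longrightarrow> distr M borel (Y k) = nu" unfolding nu_def by (rule Y_id)

lemma nu_density: "nu = density mu (\<lambda>x. ennreal (1/pp) * indicator {0<..} x)"
proof (rule measure_eqI)
  show "sets nu = sets (density mu (\<lambda>x. ennreal (1/pp) * indicator {0<..} x))"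
    by (simp add: nu_def mu_def)
  fix U assume "U \<in> sets nu"
  then have U: "U \<in> sets borel" by (simp add: nu_def)
  have "emeasure nu U = ennreal (prob {\<omega> \<in> space M. Y 2 \<omega> \<in> U})"
    using U by (simp add: nu_def emeasure_distr emeasure_eq_measure vimage_def Int_def conj_commute)
  also have "\<dots> = ennreal (prob {\<omega> \<in> space M. X 2 \<omega> \<in> U \<inter> {0<..}} / pp)"
    using Y_law[of 2 U] U by (simp add: cond_prob_def pp_def)
  also have "\<dots> = ennreal (1/pp) * emeasure mu (U \<inter> {0<..})"
    using U pp_pos by (simp add: mu_def emeasure_distr emeasure_eq_measure vimage_def Int_def conj_commute ennreal_mult[symmetric])
  also have "\<dots> = (\<integral>\<^sup>+x. ennreal (1/pp) * indicator (U \<inter> {0<..}) x \<partial>mu)"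
    using U by (simp add: mu_def nn_integral_cmult_indicator)
  also have "\<dots> = emeasure (density mu (\<lambda>x. ennreal (1/pp) * indicator {0<..} x)) U"
    using U by (subst emeasure_density) (auto simp: mu_def intro!: nn_integral_cong split: split_indicator)
  finally show "emeasure nu U = emeasure (density mu (\<lambda>x. ennreal (1/pp) * indicator {0<..} x)) U" .
qed

lemma nu_int:
  assumes g: "g \<in> borel_measurable borel"
  shows "(\<integral>\<^sup>+x. g x * indicator {0<..} x \<partial>mu) = ennreal pp * (\<integral>\<^sup>+y. g y \<partial>nu)"
proof -
  have "(\<integral>\<^sup>+y. g y \<partial>nu) = (\<integral>\<^sup>+x. (ennreal (1/pp) * indicator {0<..} x) * g x \<partial>mu)"
    unfolding nu_density using g by (subst nn_integral_density) (auto simp: mu_def)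
  also have "\<dots> = ennreal (1/pp) * (\<integral>\<^sup>+x. g x * indicator {0<..} x \<partial>mu)"
    using g by (subst nn_integral_cmult[symmetric]) (auto simp: mu_def mult_ac)
  finally have "ennreal pp * (\<integral>\<^sup>+y. g y \<partial>nu) = ennreal pp * ennreal (1/pp) * (\<integral>\<^sup>+x. g x * indicator {0<..} x \<partial>mu)"
    by (simp add: mult_ac)
  also have "ennreal pp * ennreal (1/pp) = 1" using pp_pos by (simp flip: ennreal_mult)
  finally show ?thesis by simp
qed

lemma mu_pos: "emeasure mu {0<..} = ennreal pp"
  by (simp add: mu_def emeasure_distr emeasure_eq_measure pp_def vimage_def Int_def conj_commute)

lemma mu_nonpos: "emeasure mu {..0} = ennreal (1 - pp)"
proof -
  have "emeasure mu {..0} = ennreal (prob {\<omega> \<in> space M. X 2 \<omega> \<le> 0})"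
    by (simp add: mu_def emeasure_distr emeasure_eq_measure vimage_def Int_def conj_commute)
  also have "prob {\<omega> \<in> space M. X 2 \<omega> \<le> 0} = 1 - pp"
  proof -
    have "prob {\<omega> \<in> space M. X 2 \<omega> \<le> 0} = prob (space M - {\<omega> \<in> space M. X 2 \<omega> > 0})"
      by (intro arg_cong[where f=prob]) auto
    also have "\<dots> = 1 - pp" by (subst prob_compl) (auto simp: pp_def)
    finally show ?thesis .
  qed
  finally show ?thesis .
qed

end

context setting begin

lemma frakS_Suc: "frakS Y (Suc k) \<omega> = frakS Y k \<omega> + Y (k+2) \<omega>"
  unfolding frakS_def by (simp add: sum.cl_ivl_Suc)

lemma frakS_0[simp]: "frakS Y 0 \<omega> = 0"
  unfolding frakS_def by simp

lemma frakS_meas[measurable]: "frakS Y k \<in> borel_measurable M"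
  unfolding frakS_def by (intro borel_measurable_sum rvY) auto

lemma sets_pos[measurable]: "({0<..} :: real set) \<in> sets borel" by simp
lemma sets_nonpos[measurable]: "({..0} :: real set) \<in> sets borel" by simp

lemma ind_pos_meas[measurable (raw)]:
  fixes f :: "'b \<Rightarrow> real"
  shows "f \<in> borel_measurable N \<Longrightarrow> (\<lambda>x. indicator {0<..} (f x) :: ennreal) \<in> borel_measurable N"
  by (rule borel_measurable_indicator'[where A="\<lambda>_. {0<..}"]) (auto intro: measurable_sets)

lemma ind_nonpos_meas[measurable (raw)]:
  fixes f :: "'b \<Rightarrow> real"
  shows "f \<in> borel_measurable N \<Longrightarrow> (\<lambda>x. indicator {..0} (f x) :: ennreal) \<in> borel_measurable N"
  by (rule borel_measurable_indicator'[where A="\<lambda>_. {..0}"]) (auto intro: measurable_sets)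

lemma hshift_meas:
  fixes h :: "real \<Rightarrow> real \<Rightarrow> ennreal"
  assumes h: "case_prod h \<in> borel_measurable (borel \<Otimes>\<^sub>M borel)"
  shows "(\<lambda>v. h x (w + v)) \<in> borel_measurable borel"
proof -
  have "(\<lambda>v::real. w + v) \<in> borel_measurable borel" by (intro borel_measurable_add) auto
  then have "(\<lambda>v. (x, w + v)) \<in> measurable borel (borel \<Otimes>\<^sub>M borel)" by measurable
  from measurable_comp[OF this h] show ?thesis by (simp add: comp_def)
qed

lemma hint_meas:
  fixes h :: "real \<Rightarrow> real \<Rightarrow> ennreal"
  assumes h: "case_prod h \<in> borel_measurable (borel \<Otimes>\<^sub>M borel)"
  shows "(\<lambda>(x, w). ennreal pp * (\<integral>\<^sup>+y. h x (w + y) \<partial>nu)) \<in> borel_measurable (borel \<Otimes>\<^sub>M borel)"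
proof -
  interpret N: prob_space nu by (rule nu_prob)
  have "(\<lambda>z. (fst (fst z), snd (fst z) + snd z)) \<in> measurable ((borel \<Otimes>\<^sub>M borel) \<Otimes>\<^sub>M nu) (borel \<Otimes>\<^sub>M borel)"
    by (simp add: nu_def cong: measurable_cong_sets) measurable
  from measurable_comp[OF this h]
  have "case_prod (\<lambda>xw y. h (fst xw) (snd xw + y)) \<in> borel_measurable ((borel \<Otimes>\<^sub>M borel) \<Otimes>\<^sub>M nu)"
    by (simp add: comp_def case_prod_beta')
  from N.borel_measurable_nn_integral[OF this]
  have "(\<lambda>xw. \<integral>\<^sup>+y. h (fst xw) (snd xw + y) \<partial>nu) \<in> borel_measurable (borel \<Otimes>\<^sub>M borel)" .
  then show ?thesis by (simp add: case_prod_beta')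
qed

lemma claimJ:
  fixes h :: "real \<Rightarrow> real \<Rightarrow> ennreal"
  assumes "finite J" "J \<subseteq> {2..}" and h: "case_prod h \<in> borel_measurable (borel \<Otimes>\<^sub>M borel)"
  shows "(\<integral>\<^sup>+\<omega>. h (X 1 \<omega>) (\<Sum>j\<in>J. X j \<omega>) * (\<Prod>j\<in>J. indicator {0<..} (X j \<omega>)) \<partial>M)
       = ennreal pp ^ card J * (\<integral>\<^sup>+\<omega>. h (X 1 \<omega>) (frakS Y (card J) \<omega>) \<partial>M)"
  using assms
proof (induction J arbitrary: h rule: finite_induct)
  case empty
  then show ?case by simp
next
  case (insert i J h)
  have i2: "2 \<le> i" using insert by auto
  have J2: "J \<subseteq> {2..}" using insert by auto
  define A :: "(nat + nat) set" where "A = Inl ` ({1} \<union> J)"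
  have A: "A \<subseteq> IS" "Inl i \<in> IS" "Inl i \<notin> A" using J2 i2 insert by (auto simp: A_def IS_def)
  define H where "H = (\<lambda>(u::nat+nat \<Rightarrow> real) v. h (u (Inl 1)) ((\<Sum>j\<in>J. u (Inl j)) + v) *
      (indicator {0<..} v * (\<Prod>j\<in>J. indicator {0<..} (u (Inl j)))) :: ennreal)"
  have Hm: "case_prod H \<in> borel_measurable (PiM A (\<lambda>_. borel) \<Otimes>\<^sub>M borel)"
  proof -
    have "(\<lambda>(u::nat+nat \<Rightarrow> real, v). (u (Inl 1), (\<Sum>j\<in>J. u (Inl j)) + v)) \<in> measurable (PiM A (\<lambda>_. borel) \<Otimes>\<^sub>M borel) (borel \<Otimes>\<^sub>M borel)"
      unfolding A_def by measurable
    from measurable_comp[OF this insert.prems(2)]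
    have 1: "(\<lambda>(u::nat+nat \<Rightarrow> real, v). h (u (Inl 1)) ((\<Sum>j\<in>J. u (Inl j)) + v)) \<in> borel_measurable (PiM A (\<lambda>_. borel) \<Otimes>\<^sub>M borel)"
      by (simp add: comp_def case_prod_beta')
    have c: "(\<lambda>z::(nat+nat \<Rightarrow> real) \<times> real. fst z (Inl j)) \<in> borel_measurable (PiM A (\<lambda>_. borel) \<Otimes>\<^sub>M borel)" if "j \<in> J" for j
    proof -
      have "Inl j \<in> A" using that by (simp add: A_def)
      from measurable_comp[OF measurable_fst measurable_component_singleton[OF this]]
      show ?thesis by (simp add: comp_def)
    qed
    have 2: "(\<lambda>(u::nat+nat \<Rightarrow> real, v::real). (indicator {0<..} v * (\<Prod>j\<in>J. indicator {0<..} (u (Inl j))) :: ennreal)) \<in> borel_measurable (PiM A (\<lambda>_. borel) \<Otimes>\<^sub>M borel)"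
    proof -
      have "(\<lambda>z::(nat+nat \<Rightarrow> real) \<times> real. (\<Prod>j\<in>J. indicator {0<..} (fst z (Inl j))) :: ennreal) \<in> borel_measurable (PiM A (\<lambda>_. borel) \<Otimes>\<^sub>M borel)"
        by (intro borel_measurable_prod_ennreal ind_pos_meas c)
      from borel_measurable_times_ennreal[OF ind_pos_meas[OF measurable_snd] this]
      show ?thesis by (simp add: case_prod_beta')
    qed
    show ?thesis unfolding H_def using borel_measurable_times_ennreal[OF 1 2] by (simp add: case_prod_beta')
  qed
  have "(\<integral>\<^sup>+\<omega>. h (X 1 \<omega>) (\<Sum>j\<in>insert i J. X j \<omega>) * (\<Prod>j\<in>insert i J. indicator {0<..} (X j \<omega>)) \<partial>M)
      = (\<integral>\<^sup>+\<omega>. H (restrict (\<lambda>j. Z j \<omega>) A) (Z (Inl i) \<omega>) \<partial>M)"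
    using insert by (intro nn_integral_cong) (simp add: H_def A_def add.commute)
  also have "\<dots> = (\<integral>\<^sup>+\<omega>. (\<integral>\<^sup>+v. H (restrict (\<lambda>j. Z j \<omega>) A) v \<partial>distr M borel (Z (Inl i))) \<partial>M)"
    by (rule indep_one_nn_integral[OF indepZ A Hm])
  also have "\<dots> = (\<integral>\<^sup>+\<omega>. (\<lambda>x w. ennreal pp * (\<integral>\<^sup>+y. h x (w + y) \<partial>nu)) (X 1 \<omega>) (\<Sum>j\<in>J. X j \<omega>) * (\<Prod>j\<in>J. indicator {0<..} (X j \<omega>)) \<partial>M)"
  proof (rule nn_integral_cong)
    fix \<omega> assume \<omega>: "\<omega> \<in> space M"
    let ?x = "X 1 \<omega>" and ?w = "\<Sum>j\<in>J. X j \<omega>" and ?P = "(\<Prod>j\<in>J. indicator {0<..} (X j \<omega>)) :: ennreal"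
    have hm: "(\<lambda>v. h ?x (?w + v)) \<in> borel_measurable borel" by (rule hshift_meas[OF insert.prems(2)])
    have dm: "distr M borel (Z (Inl i)) = mu" using distrX[OF i2] by simp
    have "(\<integral>\<^sup>+v. H (restrict (\<lambda>j. Z j \<omega>) A) v \<partial>distr M borel (Z (Inl i)))
        = (\<integral>\<^sup>+v. (h ?x (?w + v) * indicator {0<..} v) * ?P \<partial>mu)"
      unfolding dm using insert i2 by (intro nn_integral_cong) (simp_all add: H_def A_def mult_ac)
    also have "\<dots> = (\<integral>\<^sup>+v. h ?x (?w + v) * indicator {0<..} v \<partial>mu) * ?P"
      using hm by (intro nn_integral_multc) (simp add: mu_def)
    also have "\<dots> = ennreal pp * (\<integral>\<^sup>+y. h ?x (?w + y) \<partial>nu) * ?P"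
      using nu_int[OF hm] by simp
    finally show "(\<integral>\<^sup>+v. H (restrict (\<lambda>j. Z j \<omega>) A) v \<partial>distr M borel (Z (Inl i)))
       = (\<lambda>x w. ennreal pp * (\<integral>\<^sup>+y. h x (w + y) \<partial>nu)) ?x ?w * ?P" by simp
  qed
  also have "\<dots> = ennreal pp ^ card J * (\<integral>\<^sup>+\<omega>. ennreal pp * (\<integral>\<^sup>+y. h (X 1 \<omega>) (frakS Y (card J) \<omega> + y) \<partial>nu) \<partial>M)"
    using insert.IH[OF J2 hint_meas[OF insert.prems(2)]] by simp
  also have "\<dots> = ennreal pp ^ card (insert i J) * (\<integral>\<^sup>+\<omega>. h (X 1 \<omega>) (frakS Y (card (insert i J)) \<omega>) \<partial>M)"
  proof -
    let ?k = "card J"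
    define B :: "(nat + nat) set" where "B = insert (Inl 1) (Inr ` {2..?k+1})"
    have B: "B \<subseteq> IS" "Inr (?k+2) \<in> IS" "Inr (?k+2) \<notin> B" by (auto simp: B_def IS_def)
    define G where "G = (\<lambda>(u::nat+nat \<Rightarrow> real) v. h (u (Inl 1)) ((\<Sum>j\<in>{2..?k+1}. u (Inr j)) + v))"
    have Gm: "case_prod G \<in> borel_measurable (PiM B (\<lambda>_. borel) \<Otimes>\<^sub>M borel)"
    proof -
      have "(\<lambda>(u::nat+nat \<Rightarrow> real, v). (u (Inl 1), (\<Sum>j\<in>{2..?k+1}. u (Inr j)) + v)) \<in> measurable (PiM B (\<lambda>_. borel) \<Otimes>\<^sub>M borel) (borel \<Otimes>\<^sub>M borel)"
        unfolding B_def by measurable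
      from measurable_comp[OF this insert.prems(2)] show ?thesis
        by (simp add: G_def comp_def case_prod_beta')
    qed
    have "(\<integral>\<^sup>+\<omega>. ennreal pp * (\<integral>\<^sup>+y. h (X 1 \<omega>) (frakS Y ?k \<omega> + y) \<partial>nu) \<partial>M)
        = ennreal pp * (\<integral>\<^sup>+\<omega>. (\<integral>\<^sup>+v. G (restrict (\<lambda>j. Z j \<omega>) B) v \<partial>distr M borel (Z (Inr (?k+2)))) \<partial>M)"
    proof (subst nn_integral_cmult)
      show "(\<lambda>\<omega>. \<integral>\<^sup>+y. h (X 1 \<omega>) (frakS Y ?k \<omega> + y) \<partial>nu) \<in> borel_measurable M"
      proof -
        have "(\<lambda>\<omega>. (X 1 \<omega>, frakS Y ?k \<omega>)) \<in> measurable M (borel \<Otimes>\<^sub>M borel)" by measurable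
        from measurable_comp[OF this hint_meas[OF insert.prems(2)]]
        have "(\<lambda>\<omega>. ennreal pp * (\<integral>\<^sup>+y. h (X 1 \<omega>) (frakS Y ?k \<omega> + y) \<partial>nu)) \<in> borel_measurable M"
          by (simp add: comp_def)
        then have "(\<lambda>\<omega>. ennreal (1/pp) * (ennreal pp * (\<integral>\<^sup>+y. h (X 1 \<omega>) (frakS Y ?k \<omega> + y) \<partial>nu))) \<in> borel_measurable M"
          by measurable
        moreover have "ennreal (1/pp) * ennreal pp = 1" using pp_pos by (simp flip: ennreal_mult)
        ultimately show ?thesis by (simp add: mult.assoc[symmetric])
      qed
    qed (auto intro!: arg_cong2[where f="(*)"] nn_integral_cong simp: G_def B_def distrY frakS_def)
    also have "\<dots> = ennreal pp * (\<integral>\<^sup>+\<omega>. G (restrict (\<lambda>j. Z j \<omega>) B) (Z (Inr (?k+2)) \<omega>) \<partial>M)"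
      by (subst indep_one_nn_integral[OF indepZ B Gm]) simp
    also have "\<dots> = ennreal pp * (\<integral>\<^sup>+\<omega>. h (X 1 \<omega>) (frakS Y (Suc ?k) \<omega>) \<partial>M)"
      by (auto intro!: arg_cong2[where f="(*)"] nn_integral_cong simp: G_def B_def frakS_Suc frakS_def)
    finally show ?thesis using insert by (simp add: mult_ac)
  qed
  finally show ?case .
qed

end

lemma sum_Pow_card:
  fixes f :: "nat \<Rightarrow> 'b::comm_semiring_1"
  assumes "finite S"
  shows "(\<Sum>J\<in>Pow S. f (card J)) = (\<Sum>k\<le>card S. of_nat (card S choose k) * f k)"
proof -
  have "(\<Sum>J\<in>Pow S. f (card J)) = (\<Sum>k\<le>card S. \<Sum>J\<in>{J. J \<in> Pow S \<and> card J = k}. f (card J))"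
    using assms by (intro sum.group[symmetric]) (auto intro: card_mono)
  also have "\<dots> = (\<Sum>k\<le>card S. of_nat (card S choose k) * f k)"
  proof (intro sum.cong refl)
    fix k
    have "(\<Sum>J\<in>{J. J \<in> Pow S \<and> card J = k}. f (card J)) = (\<Sum>J\<in>{J. J \<subseteq> S \<and> card J = k}. f k)"
      by (intro sum.cong) auto
    also have "\<dots> = of_nat (card {J. J \<subseteq> S \<and> card J = k}) * f k" by simp
    also have "\<dots> = of_nat (card S choose k) * f k" using n_subsets[OF assms] by simp
    finally show "(\<Sum>J\<in>{J. J \<in> Pow S \<and> card J = k}. f (card J)) = of_nat (card S choose k) * f k" .
  qed
  finally show ?thesis .
qed

context setting begin

lemma restrict_meas: "A \<subseteq> IS \<Longrightarrow> (\<lambda>\<omega>. restrict (\<lambda>j. Z j \<omega>) A) \<in> measurable M (PiM A (\<lambda>_. borel))"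
  by (intro measurable_restrict rvZ) auto

lemma restrict_comp_meas: "A \<subseteq> IS \<Longrightarrow> F \<in> borel_measurable (PiM A (\<lambda>_. borel)) \<Longrightarrow> (\<lambda>\<omega>. F (restrict (\<lambda>j. Z j \<omega>) A)) \<in> borel_measurable M"
  using measurable_comp[OF restrict_meas] by (simp add: comp_def)

lemma claimZ:
  fixes h :: "real \<Rightarrow> real \<Rightarrow> ennreal"
  assumes "finite Zs" "Zs \<subseteq> {2..}" and J: "finite J" "J \<subseteq> {2..}" "J \<inter> Zs = {}"
    and h: "case_prod h \<in> borel_measurable (borel \<Otimes>\<^sub>M borel)"
  shows "(\<integral>\<^sup>+\<omega>. h (X 1 \<omega>) (\<Sum>j\<in>J. X j \<omega>) * (\<Prod>j\<in>J. indicator {0<..} (X j \<omega>)) * (\<Prod>j\<in>Zs. indicator {..0} (X j \<omega>)) \<partial>M)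
       = ennreal (1 - pp) ^ card Zs * (\<integral>\<^sup>+\<omega>. h (X 1 \<omega>) (\<Sum>j\<in>J. X j \<omega>) * (\<Prod>j\<in>J. indicator {0<..} (X j \<omega>)) \<partial>M)"
  using assms(1,2) J(3)
proof (induction Zs rule: finite_induct)
  case empty
  then show ?case by simp
next
  case (insert i Zs)
  have i2: "2 \<le> i" and Z2: "Zs \<subseteq> {2..}" and iJ: "i \<notin> J" and JZ: "J \<inter> Zs = {}" using insert by auto
  define A :: "(nat + nat) set" where "A = Inl ` ({1} \<union> J \<union> Zs)"
  have A: "A \<subseteq> IS" "Inl i \<in> IS" "Inl i \<notin> A" using J Z2 i2 insert iJ by (auto simp: A_def IS_def)
  define F where "F = (\<lambda>(u::nat+nat \<Rightarrow> real). h (u (Inl 1)) (\<Sum>j\<in>J. u (Inl j)) *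
      (\<Prod>j\<in>J. indicator {0<..} (u (Inl j))) * (\<Prod>j\<in>Zs. indicator {..0} (u (Inl j))) :: ennreal)"
  define H where "H = (\<lambda>(u::nat+nat \<Rightarrow> real) (v::real). F u * indicator {..0} v)"
  have c: "(\<lambda>u::(nat+nat \<Rightarrow> real). u (Inl j)) \<in> borel_measurable (PiM A (\<lambda>_. borel))" if "j \<in> {1} \<union> J \<union> Zs" for j
    using that by (intro measurable_component_singleton) (auto simp: A_def)
  have Fm: "F \<in> borel_measurable (PiM A (\<lambda>_. borel))"
  proof -
    have "(\<lambda>u::nat+nat \<Rightarrow> real. (u (Inl 1), \<Sum>j\<in>J. u (Inl j))) \<in> measurable (PiM A (\<lambda>_. borel)) (borel \<Otimes>\<^sub>M borel)"
      using c by (intro measurable_Pair borel_measurable_sum) auto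
    from measurable_comp[OF this h]
    have 1: "(\<lambda>u::nat+nat \<Rightarrow> real. h (u (Inl 1)) (\<Sum>j\<in>J. u (Inl j))) \<in> borel_measurable (PiM A (\<lambda>_. borel))"
      by (simp add: comp_def)
    have 2: "(\<lambda>u::nat+nat \<Rightarrow> real. (\<Prod>j\<in>J. indicator {0<..} (u (Inl j))) :: ennreal) \<in> borel_measurable (PiM A (\<lambda>_. borel))"
      using c by (intro borel_measurable_prod_ennreal ind_pos_meas) auto
    have 3: "(\<lambda>u::nat+nat \<Rightarrow> real. (\<Prod>j\<in>Zs. indicator {..0} (u (Inl j))) :: ennreal) \<in> borel_measurable (PiM A (\<lambda>_. borel))"
      using c by (intro borel_measurable_prod_ennreal ind_nonpos_meas) auto
    show ?thesis unfolding F_def using borel_measurable_times_ennreal[OF borel_measurable_times_ennreal[OF 1 2] 3] by simp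
  qed
  have Hm: "case_prod H \<in> borel_measurable (PiM A (\<lambda>_. borel) \<Otimes>\<^sub>M borel)"
    unfolding H_def using borel_measurable_times_ennreal[OF measurable_comp[OF measurable_fst Fm] ind_nonpos_meas[OF measurable_snd]]
    by (simp add: comp_def case_prod_beta')
  have "(\<integral>\<^sup>+\<omega>. h (X 1 \<omega>) (\<Sum>j\<in>J. X j \<omega>) * (\<Prod>j\<in>J. indicator {0<..} (X j \<omega>)) * (\<Prod>j\<in>insert i Zs. indicator {..0} (X j \<omega>)) \<partial>M)
      = (\<integral>\<^sup>+\<omega>. H (restrict (\<lambda>j. Z j \<omega>) A) (Z (Inl i) \<omega>) \<partial>M)"
    using insert by (intro nn_integral_cong) (simp add: H_def F_def A_def mult_ac)
  also have "\<dots> = (\<integral>\<^sup>+\<omega>. (\<integral>\<^sup>+v. H (restrict (\<lambda>j. Z j \<omega>) A) v \<partial>distr M borel (Z (Inl i))) \<partial>M)"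
    by (rule indep_one_nn_integral[OF indepZ A Hm])
  also have "\<dots> = (\<integral>\<^sup>+\<omega>. F (restrict (\<lambda>j. Z j \<omega>) A) * ennreal (1 - pp) \<partial>M)"
  proof (rule nn_integral_cong)
    fix \<omega> assume \<omega>: "\<omega> \<in> space M"
    have dm: "distr M borel (Z (Inl i)) = mu" using distrX[OF i2] by simp
    show "(\<integral>\<^sup>+v. H (restrict (\<lambda>j. Z j \<omega>) A) v \<partial>distr M borel (Z (Inl i))) = F (restrict (\<lambda>j. Z j \<omega>) A) * ennreal (1 - pp)"
      unfolding dm H_def using mu_nonpos
      by (subst nn_integral_cmult) (auto simp: mu_def mult_ac)
  qed
  also have "\<dots> = (\<integral>\<^sup>+\<omega>. h (X 1 \<omega>) (\<Sum>j\<in>J. X j \<omega>) * (\<Prod>j\<in>J. indicator {0<..} (X j \<omega>)) * (\<Prod>j\<in>Zs. indicator {..0} (X j \<omega>)) \<partial>M) * ennreal (1 - pp)"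
  proof (subst nn_integral_multc)
    show "(\<lambda>\<omega>. F (restrict (\<lambda>j. Z j \<omega>) A)) \<in> borel_measurable M"
      using Fm A(1) by (rule restrict_comp_meas[rotated])
  qed (use insert in \<open>auto intro!: arg_cong2[where f="(*)"] nn_integral_cong simp: F_def A_def\<close>)
  also have "\<dots> = ennreal (1 - pp) ^ card (insert i Zs) * (\<integral>\<^sup>+\<omega>. h (X 1 \<omega>) (\<Sum>j\<in>J. X j \<omega>) * (\<Prod>j\<in>J. indicator {0<..} (X j \<omega>)) \<partial>M)"
    using insert.IH[OF Z2 JZ] insert by (simp add: mult_ac)
  finally show ?case .
qed

end

lemma pointwise_decomp:
  fixes g :: "real \<Rightarrow> ennreal" and x :: "nat \<Rightarrow> real"
  assumes S: "finite S" and nn: "\<And>j. j \<in> S \<Longrightarrow> x j \<ge> 0"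
  shows "g (\<Sum>j\<in>S. x j) = (\<Sum>J\<in>Pow S. g (\<Sum>j\<in>J. x j) * (\<Prod>j\<in>J. indicator {0<..} (x j)) * (\<Prod>j\<in>S - J. indicator {..0} (x j)))"
proof -
  define J0 where "J0 = {j\<in>S. x j > 0}"
  have J0: "J0 \<in> Pow S" by (auto simp: J0_def)
  let ?T = "\<lambda>J. g (\<Sum>j\<in>J. x j) * (\<Prod>j\<in>J. indicator {0<..} (x j) :: ennreal) * (\<Prod>j\<in>S - J. indicator {..0} (x j) :: ennreal)"
  have z: "?T J = 0" if J: "J \<in> Pow S" "J \<noteq> J0" for J
  proof -
    have fJ: "finite J" using J S by (auto intro: finite_subset)
    from J obtain j where "(j \<in> J \<and> j \<notin> J0) \<or> (j \<in> J0 \<and> j \<notin> J)" by (auto simp: J0_def)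
    then show ?thesis
    proof
      assume "j \<in> J \<and> j \<notin> J0"
      then have "(\<Prod>j\<in>J. indicator {0<..} (x j) :: ennreal) = 0"
        using J fJ by (intro prod_zero) (auto simp: J0_def intro!: bexI[of _ j])
      then show ?thesis by simp
    next
      assume "j \<in> J0 \<and> j \<notin> J"
      then have "(\<Prod>j\<in>S - J. indicator {..0} (x j) :: ennreal) = 0"
        using J S by (intro prod_zero) (auto simp: J0_def intro!: bexI[of _ j])
      then show ?thesis by simp
    qed
  qed
  have "(\<Sum>J\<in>Pow S. ?T J) = ?T J0 + (\<Sum>J\<in>Pow S - {J0}. ?T J)"
    using S J0 by (intro sum.remove) auto
  also have "(\<Sum>J\<in>Pow S - {J0}. ?T J) = 0" using z by (intro sum.neutral) auto
  also have "(\<Prod>j\<in>J0. indicator {0<..} (x j) :: ennreal) = 1" by (intro prod.neutral) (auto simp: J0_def split: split_indicator)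
  also have "(\<Prod>j\<in>S - J0. indicator {..0} (x j) :: ennreal) = 1" by (intro prod.neutral) (auto simp: J0_def split: split_indicator)
  also have "(\<Sum>j\<in>J0. x j) = (\<Sum>j\<in>S. x j)"
    using S nn by (intro sum.mono_neutral_left) (auto simp: J0_def dest: nn intro: antisym)
  finally show ?thesis by simp
qed

context setting begin

lemma partS_split: "1 \<le> n \<Longrightarrow> partS X n \<omega> = X 1 \<omega> + (\<Sum>j\<in>{2..n}. X j \<omega>)"
  unfolding partS_def by (subst sum.atLeast_Suc_atMost) (auto simp: numeral_2_eq_2)

lemma partS_meas[measurable]: "partS X n \<in> borel_measurable M"
  unfolding partS_def by (intro borel_measurable_sum rvX) auto

lemma decomp_enn:
  assumes n: "1 \<le> n" and B1: "B1 \<in> sets borel"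
  shows "emeasure M {\<omega>\<in>space M. X 1 \<omega> \<in> B1 \<and> partS X n \<omega> \<le> L}
    = (\<Sum>k\<le>n-1. of_nat ((n-1) choose k) * (ennreal (1-pp) ^ (n-1-k) * ennreal pp ^ k *
         emeasure M {\<omega>\<in>space M. X 1 \<omega> \<in> B1 \<and> X 1 \<omega> + frakS Y k \<omega> \<le> L}))"
proof -
  define S where "S = {2..n}"
  have S: "finite S" "S \<subseteq> {2..}" "card S = n - 1" by (auto simp: S_def)
  define h where "h = (\<lambda>x s. indicator B1 x * indicator {..L} (x + s) :: ennreal)"
  have hm: "case_prod h \<in> borel_measurable (borel \<Otimes>\<^sub>M borel)"
    unfolding h_def using B1 by measurable
  have Xm: "\<And>j. j \<in> S \<Longrightarrow> X j \<in> borel_measurable M" by (auto simp: S_def intro: rvX)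
  let ?T = "\<lambda>J \<omega>. h (X 1 \<omega>) (\<Sum>j\<in>J. X j \<omega>) * (\<Prod>j\<in>J. indicator {0<..} (X j \<omega>)) * (\<Prod>j\<in>S - J. indicator {..0} (X j \<omega>))"
  have "emeasure M {\<omega>\<in>space M. X 1 \<omega> \<in> B1 \<and> partS X n \<omega> \<le> L} = (\<integral>\<^sup>+\<omega>. indicator {\<omega>\<in>space M. X 1 \<omega> \<in> B1 \<and> partS X n \<omega> \<le> L} \<omega> \<partial>M)"
    using B1 by (subst nn_integral_indicator) auto
  also have "\<dots> = (\<integral>\<^sup>+\<omega>. (\<Sum>J\<in>Pow S. ?T J \<omega>) \<partial>M)"
  proof (rule nn_integral_cong)
    fix \<omega> assume \<omega>: "\<omega> \<in> space M"
    have "indicator {\<omega>\<in>space M. X 1 \<omega> \<in> B1 \<and> partS X n \<omega> \<le> L} \<omega> = h (X 1 \<omega>) (\<Sum>j\<in>S. X j \<omega>)"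
      using \<omega> n by (simp add: h_def partS_split S_def split: split_indicator)
    also have "\<dots> = (\<Sum>J\<in>Pow S. ?T J \<omega>)"
      using S(1) by (rule pointwise_decomp) (use \<omega> nonneg S_def in auto)
    finally show "indicator {\<omega>\<in>space M. X 1 \<omega> \<in> B1 \<and> partS X n \<omega> \<le> L} \<omega> = (\<Sum>J\<in>Pow S. ?T J \<omega>)" .
  qed
  also have "\<dots> = (\<Sum>J\<in>Pow S. (\<integral>\<^sup>+\<omega>. ?T J \<omega> \<partial>M))"
  proof (rule nn_integral_sum)
    fix J assume J: "J \<in> Pow S"
    have "(\<lambda>\<omega>. (X 1 \<omega>, \<Sum>j\<in>J. X j \<omega>)) \<in> measurable M (borel \<Otimes>\<^sub>M borel)"
      using J Xm by (intro measurable_Pair borel_measurable_sum) auto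
    from measurable_comp[OF this hm] have 1: "(\<lambda>\<omega>. h (X 1 \<omega>) (\<Sum>j\<in>J. X j \<omega>)) \<in> borel_measurable M" by (simp add: comp_def)
    have 2: "(\<lambda>\<omega>. \<Prod>j\<in>J. indicator {0<..} (X j \<omega>) :: ennreal) \<in> borel_measurable M"
      using J Xm by (intro borel_measurable_prod_ennreal ind_pos_meas) auto
    have 3: "(\<lambda>\<omega>. \<Prod>j\<in>S - J. indicator {..0} (X j \<omega>) :: ennreal) \<in> borel_measurable M"
      using J Xm by (intro borel_measurable_prod_ennreal ind_nonpos_meas) auto
    show "(\<lambda>\<omega>. ?T J \<omega>) \<in> borel_measurable M"
      using borel_measurable_times_ennreal[OF borel_measurable_times_ennreal[OF 1 2] 3] .
  qed
  also have "\<dots> = (\<Sum>J\<in>Pow S. ennreal (1-pp) ^ (n-1-card J) * ennreal pp ^ card J *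
         emeasure M {\<omega>\<in>space M. X 1 \<omega> \<in> B1 \<and> X 1 \<omega> + frakS Y (card J) \<omega> \<le> L})"
  proof (rule sum.cong[OF refl])
    fix J assume J: "J \<in> Pow S"
    have fJ: "finite J" "J \<subseteq> {2..}" using J S by (auto intro: finite_subset)
    have cSJ: "card (S - J) = n - 1 - card J" using J S by (subst card_Diff_subset) (auto intro: finite_subset)
    have "(\<integral>\<^sup>+\<omega>. ?T J \<omega> \<partial>M) = ennreal (1 - pp) ^ card (S - J) * (\<integral>\<^sup>+\<omega>. h (X 1 \<omega>) (\<Sum>j\<in>J. X j \<omega>) * (\<Prod>j\<in>J. indicator {0<..} (X j \<omega>)) \<partial>M)"
      using S J fJ by (intro claimZ hm) auto
    also have "\<dots> = ennreal (1 - pp) ^ card (S - J) * (ennreal pp ^ card J * (\<integral>\<^sup>+\<omega>. h (X 1 \<omega>) (frakS Y (card J) \<omega>) \<partial>M))"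
      using claimJ[OF fJ hm] by simp
    also have "(\<integral>\<^sup>+\<omega>. h (X 1 \<omega>) (frakS Y (card J) \<omega>) \<partial>M) = emeasure M {\<omega>\<in>space M. X 1 \<omega> \<in> B1 \<and> X 1 \<omega> + frakS Y (card J) \<omega> \<le> L}"
    proof -
      have "(\<integral>\<^sup>+\<omega>. h (X 1 \<omega>) (frakS Y (card J) \<omega>) \<partial>M) = (\<integral>\<^sup>+\<omega>. indicator {\<omega>\<in>space M. X 1 \<omega> \<in> B1 \<and> X 1 \<omega> + frakS Y (card J) \<omega> \<le> L} \<omega> \<partial>M)"
        by (intro nn_integral_cong) (auto simp: h_def split: split_indicator)
      also have "\<dots> = emeasure M {\<omega>\<in>space M. X 1 \<omega> \<in> B1 \<and> X 1 \<omega> + frakS Y (card J) \<omega> \<le> L}"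
        using B1 by (subst nn_integral_indicator) auto
      finally show ?thesis .
    qed
    finally show "(\<integral>\<^sup>+\<omega>. ?T J \<omega> \<partial>M) = ennreal (1-pp) ^ (n-1-card J) * ennreal pp ^ card J *
         emeasure M {\<omega>\<in>space M. X 1 \<omega> \<in> B1 \<and> X 1 \<omega> + frakS Y (card J) \<omega> \<le> L}"
      by (simp add: cSJ mult_ac)
  qed
  also have "\<dots> = (\<Sum>k\<le>n-1. of_nat ((n-1) choose k) * (ennreal (1-pp) ^ (n-1-k) * ennreal pp ^ k *
         emeasure M {\<omega>\<in>space M. X 1 \<omega> \<in> B1 \<and> X 1 \<omega> + frakS Y k \<omega> \<le> L}))"
    using sum_Pow_card[OF S(1), where f="\<lambda>k. ennreal (1-pp) ^ (n-1-k) * ennreal pp ^ k *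
         emeasure M {\<omega>\<in>space M. X 1 \<omega> \<in> B1 \<and> X 1 \<omega> + frakS Y k \<omega> \<le> L}"] S(3) by simp
  finally show ?thesis .
qed

end

context setting begin

definition "acoef n k = real ((n-1) choose k) * (1-pp) ^ (n-1-k) * pp ^ k"

lemma acoef_nonneg: "acoef n k \<ge> 0"
  using pp_le1 pp_pos by (simp add: acoef_def)

lemma decomp:
  assumes n: "1 \<le> n" and B1: "B1 \<in> sets borel"
  shows "prob {\<omega>\<in>space M. X 1 \<omega> \<in> B1 \<and> partS X n \<omega> \<le> L}
    = (\<Sum>k\<le>n-1. acoef n k * prob {\<omega>\<in>space M. X 1 \<omega> \<in> B1 \<and> X 1 \<omega> + frakS Y k \<omega> \<le> L})"
proof -
  have p0: "0 \<le> pp" "0 \<le> 1 - pp" using pp_pos pp_le1 by auto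
  have "ennreal (prob {\<omega>\<in>space M. X 1 \<omega> \<in> B1 \<and> partS X n \<omega> \<le> L})
     = (\<Sum>k\<le>n-1. of_nat ((n-1) choose k) * (ennreal (1-pp) ^ (n-1-k) * ennreal pp ^ k *
         emeasure M {\<omega>\<in>space M. X 1 \<omega> \<in> B1 \<and> X 1 \<omega> + frakS Y k \<omega> \<le> L}))"
    using decomp_enn[OF n B1, of L] by (simp add: emeasure_eq_measure)
  also have "\<dots> = (\<Sum>k\<le>n-1. ennreal (acoef n k * prob {\<omega>\<in>space M. X 1 \<omega> \<in> B1 \<and> X 1 \<omega> + frakS Y k \<omega> \<le> L}))"
    using p0 by (intro sum.cong refl)
       (simp add: acoef_def emeasure_eq_measure ennreal_power ennreal_of_nat_eq_real_of_nat ennreal_mult[symmetric])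
  also have "\<dots> = ennreal (\<Sum>k\<le>n-1. acoef n k * prob {\<omega>\<in>space M. X 1 \<omega> \<in> B1 \<and> X 1 \<omega> + frakS Y k \<omega> \<le> L})"
    using acoef_nonneg by (intro sum_ennreal) auto
  finally show ?thesis
    using acoef_nonneg by (subst (asm) ennreal_inj) (auto intro!: sum_nonneg)
qed

lemma indep_blocks_prob:
  assumes K: "\<And>j. j \<in> Ls \<Longrightarrow> K j \<subseteq> IS" and disj: "disjoint_family_on K Ls"
    and Ls: "finite Ls" "Ls \<noteq> {}"
    and f: "\<And>j. j \<in> Ls \<Longrightarrow> f j \<in> borel_measurable (PiM (K j) (\<lambda>_. borel))"
    and B: "\<And>j. j \<in> Ls \<Longrightarrow> B j \<in> sets borel"
  shows "prob (\<Inter>j\<in>Ls. {\<omega>\<in>space M. f j (restrict (\<lambda>i. Z i \<omega>) (K j)) \<in> B j})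
       = (\<Prod>j\<in>Ls. prob {\<omega>\<in>space M. f j (restrict (\<lambda>i. Z i \<omega>) (K j)) \<in> B j})"
proof -
  have "indep_vars (\<lambda>j. PiM (K j) (\<lambda>_. borel)) (\<lambda>j \<omega>. restrict (\<lambda>i. Z i \<omega>) (K j)) Ls"
    by (rule indep_vars_restrict[OF indepZ K disj])
  then have I: "indep_vars (\<lambda>_. borel) (\<lambda>j \<omega>. f j (restrict (\<lambda>i. Z i \<omega>) (K j))) Ls"
    using f by (rule indep_vars_compose2)
  have "prob (\<Inter>j\<in>Ls. (\<lambda>\<omega>. f j (restrict (\<lambda>i. Z i \<omega>) (K j))) -` B j \<inter> space M)
      = (\<Prod>j\<in>Ls. prob ((\<lambda>\<omega>. f j (restrict (\<lambda>i. Z i \<omega>) (K j))) -` B j \<inter> space M))"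
    using B Ls by (intro indep_varsD[OF I]) auto
  moreover have "\<And>j. (\<lambda>\<omega>. f j (restrict (\<lambda>i. Z i \<omega>) (K j))) -` B j \<inter> space M = {\<omega>\<in>space M. f j (restrict (\<lambda>i. Z i \<omega>) (K j)) \<in> B j}"
    by auto
  ultimately show ?thesis by simp
qed

definition "Fy t = prob {\<omega>\<in>space M. Y 2 \<omega> \<le> t}"

lemma FyY: "2 \<le> j \<Longrightarrow> prob {\<omega>\<in>space M. Y j \<omega> \<le> t} = Fy t"
proof -
  assume j: "2 \<le> j"
  have "prob {\<omega>\<in>space M. Y j \<omega> \<le> t} = measure (distr M borel (Y j)) {..t}"
    using j by (subst measure_distr) (auto simp: vimage_def Int_def conj_commute)
  also have "\<dots> = measure (distr M borel (Y 2)) {..t}" using Y_id[OF j] by simp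
  also have "\<dots> = Fy t" by (subst measure_distr) (auto simp: Fy_def vimage_def Int_def conj_commute)
  finally show ?thesis .
qed

lemma Fy_mono: "s \<le> t \<Longrightarrow> Fy s \<le> Fy t"
  unfolding Fy_def by (intro finite_measure_mono) auto

lemma Fy0: "Fy 0 = 0"
proof -
  have "Fy 0 = cond_prob M (\<lambda>\<omega>. X 2 \<omega> \<in> {..0}) (\<lambda>\<omega>. X 2 \<omega> > 0)"
    using Y_law[of 2 "{..0}"] by (simp add: Fy_def)
  also have "\<dots> = 0"
  proof -
    have e: "{\<omega>\<in>space M. X 2 \<omega> \<in> {..0} \<and> X 2 \<omega> > 0} = {}" by auto
    show ?thesis unfolding cond_prob_def e by simp
  qed
  finally show ?thesis .
qed

lemma Fy_lim: "(\<lambda>m. Fy (1 / (real m + 1))) \<longlonglongrightarrow> 0"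
proof -
  let ?A = "\<lambda>m::nat. {\<omega>\<in>space M. Y 2 \<omega> \<le> 1 / (real m + 1)}"
  have dec: "decseq ?A"
  proof (rule decseq_SucI)
    fix m :: nat
    have "1 / (real (Suc m) + 1) \<le> 1 / (real m + 1)" by (simp add: frac_le)
    then show "?A (Suc m) \<subseteq> ?A m" by auto
  qed
  have "(\<lambda>m. measure M (?A m)) \<longlonglongrightarrow> measure M (\<Inter>m. ?A m)"
    using dec by (intro finite_Lim_measure_decseq) auto
  moreover have "(\<Inter>m. ?A m) = {\<omega>\<in>space M. Y 2 \<omega> \<le> 0}"
  proof (intro equalityI subsetI)
    fix \<omega> assume w: "\<omega> \<in> (\<Inter>m. ?A m)"
    have "Y 2 \<omega> \<le> 0"
    proof (rule ccontr)
      assume "\<not> Y 2 \<omega> \<le> 0"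
      then obtain m :: nat where "1 / (real m + 1) < Y 2 \<omega>"
        using reals_Archimedean[of "Y 2 \<omega>"] by (auto simp: inverse_eq_divide)
           (metis add.commute inverse_eq_divide less_trans of_nat_Suc zero_less_one_class.zero_less_one add_pos_pos less_add_one
             inverse_less_iff_less of_nat_0_less_iff zero_less_Suc)
      moreover have "\<omega> \<in> ?A m" using w by blast
      ultimately show False by simp
    qed
    then show "\<omega> \<in> {\<omega>\<in>space M. Y 2 \<omega> \<le> 0}" using w by auto
  next
    fix \<omega> assume "\<omega> \<in> {\<omega>\<in>space M. Y 2 \<omega> \<le> 0}"
    then show "\<omega> \<in> (\<Inter>m. ?A m)" by (auto intro: order_trans[of _ 0])
  qed
  ultimately show ?thesis using Fy0 by (simp add: Fy_def)
qed

end

locale setting2 = setting +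
  fixes L :: real
  assumes I2: "lower_end M (X 2) = 0"
    and L_pos: "L > 0"
    and L_prob: "measure M {\<omega> \<in> space M. X 1 \<omega> + Y 2 \<omega> \<le> L} > 0"
begin

definition "rr k = prob {\<omega>\<in>space M. X 1 \<omega> + frakS Y k \<omega> \<le> L}"

lemma Y2_nonpos_null: "prob {\<omega>\<in>space M. Y 2 \<omega> \<le> 0} = 0"
  using Fy0 by (simp add: Fy_def)

lemma X1_lt_L: "prob {\<omega>\<in>space M. X 1 \<omega> < L} > 0"
proof -
  have "prob {\<omega> \<in> space M. X 1 \<omega> + Y 2 \<omega> \<le> L} \<le> prob ({\<omega>\<in>space M. X 1 \<omega> < L} \<union> {\<omega>\<in>space M. Y 2 \<omega> \<le> 0})"
    by (intro finite_measure_mono) auto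
  also have "\<dots> \<le> prob {\<omega>\<in>space M. X 1 \<omega> < L} + prob {\<omega>\<in>space M. Y 2 \<omega> \<le> 0}"
    by (intro measure_Un_le) auto
  finally show ?thesis using L_prob Y2_nonpos_null by simp
qed

lemma X1_le_L_eta: "\<exists>\<eta>>0. prob {\<omega>\<in>space M. X 1 \<omega> \<le> L - \<eta>} > 0"
proof -
  let ?A = "\<lambda>m::nat. {\<omega>\<in>space M. X 1 \<omega> \<le> L - 1 / (real m + 1)}"
  have inc: "incseq ?A"
  proof (rule incseq_SucI)
    fix m :: nat
    have "1 / (real (Suc m) + 1) \<le> 1 / (real m + 1)" by (simp add: frac_le)
    then show "?A m \<subseteq> ?A (Suc m)" by auto
  qed
  have lim: "(\<lambda>m. measure M (?A m)) \<longlonglongrightarrow> measure M (\<Union>m. ?A m)"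
    using inc by (intro finite_Lim_measure_incseq) auto
  have "(\<Union>m. ?A m) = {\<omega>\<in>space M. X 1 \<omega> < L}"
  proof (intro equalityI subsetI)
    fix \<omega> assume "\<omega> \<in> {\<omega>\<in>space M. X 1 \<omega> < L}"
    then have w: "\<omega> \<in> space M" "X 1 \<omega> < L" by auto
    then obtain m :: nat where m: "1 / (real m + 1) < L - X 1 \<omega>"
      using reals_Archimedean[of "L - X 1 \<omega>"] by (auto simp: inverse_eq_divide)
        (metis add.commute inverse_eq_divide less_trans of_nat_Suc zero_less_one_class.zero_less_one add_pos_pos less_add_one
             inverse_less_iff_less of_nat_0_less_iff zero_less_Suc)
    then show "\<omega> \<in> (\<Union>m. ?A m)" using w by (intro UN_I[of m]) auto
  next
    fix \<omega> assume "\<omega> \<in> (\<Union>m. ?A m)"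
    then obtain m where "\<omega> \<in> ?A m" by blast
    then have a: "\<omega> \<in> space M" "X 1 \<omega> \<le> L - 1 / (real m + 1)" by auto
    have b: "L - 1 / (real m + 1) < L" by simp
    show "\<omega> \<in> {\<omega>\<in>space M. X 1 \<omega> < L}" using order_le_less_trans[OF a(2) b] a(1) by simp
  qed
  with lim X1_lt_L have "eventually (\<lambda>m. measure M (?A m) > 0) sequentially"
    by (intro order_tendstoD) auto
  then obtain m where "measure M (?A m) > 0" by (auto dest: eventually_happens)
  then show ?thesis by (intro exI[of _ "1 / (real m + 1)"]) auto
qed

definition "cc = lower_end M (X 1)"

lemma S1_props:
  shows "L \<in> {x. x \<ge> 0 \<and> prob {\<omega>\<in>space M. X 1 \<omega> \<le> x} > 0}"
    and "bdd_below {x. x \<ge> 0 \<and> prob {\<omega>\<in>space M. X 1 \<omega> \<le> x} > 0}"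
proof -
  have "prob {\<omega>\<in>space M. X 1 \<omega> < L} \<le> prob {\<omega>\<in>space M. X 1 \<omega> \<le> L}"
    by (intro finite_measure_mono) auto
  then show "L \<in> {x. x \<ge> 0 \<and> prob {\<omega>\<in>space M. X 1 \<omega> \<le> x} > 0}" using X1_lt_L L_pos by auto
  show "bdd_below {x. x \<ge> 0 \<and> prob {\<omega>\<in>space M. X 1 \<omega> \<le> x} > 0}" by (rule bdd_belowI[of _ 0]) auto
qed

lemma pi_pos: "d > 0 \<Longrightarrow> prob {\<omega>\<in>space M. X 1 \<omega> \<le> cc + d} > 0"
proof -
  assume d: "d > 0"
  let ?S = "{x. x \<ge> 0 \<and> prob {\<omega>\<in>space M. X 1 \<omega> \<le> x} > 0}"
  have ne: "?S \<noteq> {}" using S1_props(1) by blast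
  have "Inf ?S < cc + d" using d by (simp add: cc_def lower_end_def)
  from cInf_lessD[OF ne this] obtain x where x: "x \<in> ?S" "x < cc + d" by blast
  have "prob {\<omega>\<in>space M. X 1 \<omega> \<le> x} \<le> prob {\<omega>\<in>space M. X 1 \<omega> \<le> cc + d}"
    using x by (intro finite_measure_mono) auto
  then show ?thesis using x by auto
qed

lemma Fpos_rr:
  assumes F: "\<And>t. t > 0 \<Longrightarrow> Fy t > 0"
  shows "rr k > 0"
proof -
  obtain \<eta> where eta: "\<eta> > 0" "prob {\<omega>\<in>space M. X 1 \<omega> \<le> L - \<eta>} > 0" using X1_le_L_eta by blast
  define t where "t = \<eta> / (real k + 1)"
  have t: "t > 0" using eta by (simp add: t_def)
  define Ls where "Ls = insert 0 {2..k+1}"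
  define K where "K = (\<lambda>j::nat. if j = 0 then {Inl (1::nat)} else {Inr j})"
  define f where "f = (\<lambda>j::nat. \<lambda>u::nat+nat \<Rightarrow> real. u (if j = 0 then Inl 1 else Inr j))"
  define B where "B = (\<lambda>j::nat. if j = 0 then {..L - \<eta>} else {..t})"
  have fin: "finite Ls" "Ls \<noteq> {}" by (auto simp: Ls_def)
  have Kp: "\<And>j. j \<in> Ls \<Longrightarrow> K j \<subseteq> IS" by (auto simp: Ls_def K_def IS_def)
  have disj: "disjoint_family_on K Ls" by (auto simp: disjoint_family_on_def K_def Ls_def)
  have fm: "\<And>j. j \<in> Ls \<Longrightarrow> f j \<in> borel_measurable (PiM (K j) (\<lambda>_. borel))"
    by (auto simp: f_def K_def intro!: measurable_component_singleton)
  have Bm: "\<And>j. j \<in> Ls \<Longrightarrow> B j \<in> sets borel" by (auto simp: B_def)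
  have ev: "\<And>j \<omega>. j \<in> Ls \<Longrightarrow> f j (restrict (\<lambda>i. Z i \<omega>) (K j)) = (if j = 0 then X 1 \<omega> else Y j \<omega>)"
    by (auto simp: f_def K_def)
  have "prob (\<Inter>j\<in>Ls. {\<omega>\<in>space M. f j (restrict (\<lambda>i. Z i \<omega>) (K j)) \<in> B j})
      = (\<Prod>j\<in>Ls. prob {\<omega>\<in>space M. f j (restrict (\<lambda>i. Z i \<omega>) (K j)) \<in> B j})"
    by (rule indep_blocks_prob[OF Kp disj fin fm Bm])
  also have "\<dots> = (\<Prod>j\<in>Ls. if j = 0 then prob {\<omega>\<in>space M. X 1 \<omega> \<le> L - \<eta>} else Fy t)"
  proof (intro prod.cong refl)
    fix j assume j: "j \<in> Ls"
    show "prob {\<omega>\<in>space M. f j (restrict (\<lambda>i. Z i \<omega>) (K j)) \<in> B j} = (if j = 0 then prob {\<omega>\<in>space M. X 1 \<omega> \<le> L - \<eta>} else Fy t)"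
    proof (cases "j = 0")
      case True then show ?thesis using j ev by (simp add: B_def)
    next
      case False
      then have "2 \<le> j" using j by (auto simp: Ls_def)
      then show ?thesis using j ev False FyY[of j t] by (simp add: B_def)
    qed
  qed
  also have "\<dots> > 0" using eta F[OF t] by (intro prod_pos) auto
  finally have pos: "prob (\<Inter>j\<in>Ls. {\<omega>\<in>space M. f j (restrict (\<lambda>i. Z i \<omega>) (K j)) \<in> B j}) > 0" .
  have "(\<Inter>j\<in>Ls. {\<omega>\<in>space M. f j (restrict (\<lambda>i. Z i \<omega>) (K j)) \<in> B j}) \<subseteq> {\<omega>\<in>space M. X 1 \<omega> + frakS Y k \<omega> \<le> L}"
  proof
    fix \<omega> assume w: "\<omega> \<in> (\<Inter>j\<in>Ls. {\<omega>\<in>space M. f j (restrict (\<lambda>i. Z i \<omega>) (K j)) \<in> B j})"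
    have sp: "\<omega> \<in> space M" using w by (auto simp: Ls_def)
    have x1: "X 1 \<omega> \<le> L - \<eta>" using w ev[of 0] by (auto simp: Ls_def B_def)
    have yj: "Y j \<omega> \<le> t" if j: "j \<in> {2..k+1}" for j
    proof -
      have jL: "j \<in> Ls" "j \<noteq> 0" using j by (auto simp: Ls_def)
      have "\<omega> \<in> {\<omega>\<in>space M. f j (restrict (\<lambda>i. Z i \<omega>) (K j)) \<in> B j}" using w jL by blast
      then show ?thesis using ev[OF jL(1), of \<omega>] jL by (simp add: B_def)
    qed
    have "frakS Y k \<omega> \<le> of_nat (card {2..k+1}) * t"
      unfolding frakS_def by (rule sum_bounded_above) (use yj in auto)
    also have "\<dots> = real k * t" by simp
    also have "\<dots> \<le> \<eta>" using eta by (simp add: t_def field_simps)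
    finally show "\<omega> \<in> {\<omega>\<in>space M. X 1 \<omega> + frakS Y k \<omega> \<le> L}" using x1 sp by simp
  qed
  then have "prob (\<Inter>j\<in>Ls. {\<omega>\<in>space M. f j (restrict (\<lambda>i. Z i \<omega>) (K j)) \<in> B j}) \<le> rr k"
    unfolding rr_def by (intro finite_measure_mono) auto
  with pos show ?thesis by simp
qed

end

context setting2 begin

definition "SK = {k. k \<ge> 1 \<and> rr k > 0}"

lemma Kstar_eq: "Kstar M X Y L = Sup (enat ` SK)"
  by (simp add: Kstar_def SK_def rr_def)

lemma rr_nonneg: "rr k \<ge> 0" by (simp add: rr_def)

lemma one_SK: "1 \<in> SK"
  using L_prob frakS_Suc[of 0] by (simp add: SK_def rr_def numeral_2_eq_2)

lemma Kstar_inf: "Kstar M X Y L = \<infinity> \<Longrightarrow> \<exists>k\<ge>m. k \<in> SK"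
proof (rule ccontr)
  assume inf: "Kstar M X Y L = \<infinity>" and "\<not> (\<exists>k\<ge>m. k \<in> SK)"
  then have "enat k \<le> enat m" if "k \<in> SK" for k
    using that by (auto simp: not_le intro: less_imp_le)
  then have "Sup (enat ` SK) \<le> enat m" by (auto intro!: Sup_least)
  with inf show False by (simp add: Kstar_eq)
qed

lemma Kstar_fin:
  assumes K: "Kstar M X Y L = enat K"
  shows "K \<ge> 1" "rr K > 0" "\<And>k. k > K \<Longrightarrow> rr k = 0"
proof -
  have le: "k \<le> K" if "k \<in> SK" for k
  proof -
    have "enat k \<le> Sup (enat ` SK)" using that by (intro Sup_upper) auto
    then show ?thesis using K by (simp add: Kstar_eq)
  qed
  then show "K \<ge> 1" using one_SK by auto
  have "K \<in> SK"
  proof (rule ccontr)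
    assume "K \<notin> SK"
    have "enat k \<le> enat (K - 1)" if k: "k \<in> SK" for k
    proof -
      have "k \<le> K" using le k by blast
      moreover have "k \<noteq> K" using k \<open>K \<notin> SK\<close> by blast
      ultimately show ?thesis by simp
    qed
    then have "Sup (enat ` SK) \<le> enat (K - 1)" by (auto intro!: Sup_least)
    then have "K \<le> K - 1" using K by (simp add: Kstar_eq)
    with \<open>K \<ge> 1\<close> show False by simp
  qed
  then show "rr K > 0" by (simp add: SK_def)
  fix k assume "k > K"
  then have "k \<notin> SK" using le by force
  then show "rr k = 0" using rr_nonneg[of k] \<open>k > K\<close> \<open>K \<ge> 1\<close> by (simp add: SK_def)
qed

lemma all_pos_inf:
  assumes "\<And>k. rr k > 0"
  shows "Kstar M X Y L = \<infinity>"
proof (cases "Kstar M X Y L")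
  case (enat K)
  have "K + 1 \<in> SK" using assms by (simp add: SK_def)
  then have "enat (K + 1) \<le> Sup (enat ` SK)" by (intro Sup_upper) auto
  then show ?thesis using enat by (simp add: Kstar_eq)
qed simp

lemma Kinf_Fpos:
  assumes inf: "Kstar M X Y L = \<infinity>" and t: "t > 0"
  shows "Fy t > 0"
proof (rule ccontr)
  assume "\<not> Fy t > 0"
  then have F0: "Fy t = 0" using measure_nonneg[of M] by (simp add: Fy_def) (meson antisym not_le measure_nonneg)
  obtain m :: nat where m: "L / t < real m" using reals_Archimedean2 by blast
  obtain k where k: "k \<ge> max m 1" "k \<in> SK" using Kstar_inf[OF inf] by blast
  have k1: "k \<ge> 1" and km: "L < real k * t"
  proof -
    show "k \<ge> 1" using k by simp
    have "L < real m * t" using m t by (simp add: field_simps)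
    also have "\<dots> \<le> real k * t" using k t by (intro mult_right_mono) auto
    finally show "L < real k * t" .
  qed
  have sub: "{\<omega>\<in>space M. X 1 \<omega> + frakS Y k \<omega> \<le> L} \<subseteq> (\<Union>j\<in>{2..k+1}. {\<omega>\<in>space M. Y j \<omega> \<le> t})"
  proof
    fix \<omega> assume w: "\<omega> \<in> {\<omega>\<in>space M. X 1 \<omega> + frakS Y k \<omega> \<le> L}"
    show "\<omega> \<in> (\<Union>j\<in>{2..k+1}. {\<omega>\<in>space M. Y j \<omega> \<le> t})"
    proof (rule ccontr)
      assume "\<omega> \<notin> (\<Union>j\<in>{2..k+1}. {\<omega>\<in>space M. Y j \<omega> \<le> t})"
      then have gt: "\<And>j. j \<in> {2..k+1} \<Longrightarrow> t < Y j \<omega>" using w by force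
      have "(\<Sum>j\<in>{2..k+1}. t) < (\<Sum>j\<in>{2..k+1}. Y j \<omega>)"
        using k1 gt by (intro sum_strict_mono) auto
      then have "real k * t < frakS Y k \<omega>" by (simp add: frakS_def)
      moreover have "X 1 \<omega> \<ge> 0" using w nonneg[of 1 \<omega>] by simp
      ultimately show False using w km by simp
    qed
  qed
  have "rr k \<le> measure M (\<Union>j\<in>{2..k+1}. {\<omega>\<in>space M. Y j \<omega> \<le> t})"
    unfolding rr_def using sub by (intro finite_measure_mono) auto
  also have "\<dots> \<le> (\<Sum>j\<in>{2..k+1}. measure M {\<omega>\<in>space M. Y j \<omega> \<le> t})"
    by (intro measure_UNION_le) auto
  also have "\<dots> = 0" using FyY F0 by simp
  finally show False using k by (simp add: SK_def)
qed

lemma p1_Fpos: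
  assumes p1: "pp = 1" and t: "t > 0"
  shows "Fy t > 0"
proof -
  let ?S = "{x. x \<ge> 0 \<and> prob {\<omega>\<in>space M. X 2 \<omega> \<le> x} > 0}"
  have ne: "?S \<noteq> {}"
  proof -
    let ?A = "\<lambda>m::nat. {\<omega>\<in>space M. X 2 \<omega> \<le> real m}"
    have inc: "incseq ?A" by (rule incseq_SucI) auto
    have lim: "(\<lambda>m. measure M (?A m)) \<longlonglongrightarrow> measure M (\<Union>m. ?A m)"
      using inc by (intro finite_Lim_measure_incseq) auto
    have "(\<Union>m. ?A m) = space M"
    proof (intro equalityI subsetI)
      fix \<omega> assume "\<omega> \<in> space M"
      moreover obtain m :: nat where "X 2 \<omega> < real m" using reals_Archimedean2 by blast
      ultimately show "\<omega> \<in> (\<Union>m. ?A m)" by (intro UN_I[of m]) auto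
    qed auto
    with lim have "eventually (\<lambda>m. measure M (?A m) > 0) sequentially"
      by (intro order_tendstoD) (auto simp: prob_space)
    then obtain m where "measure M (?A m) > 0" by (auto dest: eventually_happens)
    then have "real m \<in> ?S" by auto
    then show ?thesis by blast
  qed
  have "Inf ?S < t" using I2 t by (simp add: lower_end_def)
  from cInf_lessD[OF ne this] obtain x where x: "x \<in> ?S" "x < t" by blast
  have z: "prob {\<omega>\<in>space M. X 2 \<omega> \<le> 0} = 0"
  proof -
    have "prob {\<omega> \<in> space M. X 2 \<omega> \<le> 0} = prob (space M - {\<omega> \<in> space M. X 2 \<omega> > 0})"
      by (intro arg_cong[where f=prob]) auto
    also have "\<dots> = 1 - pp" by (subst prob_compl) (auto simp: pp_def)
    finally show ?thesis using p1 by simp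
  qed
  have "prob {\<omega>\<in>space M. X 2 \<omega> \<le> x} \<le> prob ({\<omega>\<in>space M. X 2 \<omega> \<le> t \<and> X 2 \<omega> > 0} \<union> {\<omega>\<in>space M. X 2 \<omega> \<le> 0})"
    using x by (intro finite_measure_mono) auto
  also have "\<dots> \<le> prob {\<omega>\<in>space M. X 2 \<omega> \<le> t \<and> X 2 \<omega> > 0} + prob {\<omega>\<in>space M. X 2 \<omega> \<le> 0}"
    by (intro measure_Un_le) auto
  finally have pos: "prob {\<omega>\<in>space M. X 2 \<omega> \<le> t \<and> X 2 \<omega> > 0} > 0" using x z by simp
  have "Fy t = cond_prob M (\<lambda>\<omega>. X 2 \<omega> \<in> {..t}) (\<lambda>\<omega>. X 2 \<omega> > 0)"
    using Y_law[of 2 "{..t}"] by (simp add: Fy_def)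
  also have "\<dots> = prob {\<omega>\<in>space M. X 2 \<omega> \<le> t \<and> X 2 \<omega> > 0}"
    using p1 by (simp add: cond_prob_def pp_def)
  finally show ?thesis using pos by simp
qed

end

lemma markov_count:
  fixes y :: "nat \<Rightarrow> real"
  assumes I: "finite I" "card I = k" and pos: "\<And>i. i \<in> I \<Longrightarrow> y i > 0"
    and sum: "(\<Sum>i\<in>I. y i) < a" and s: "s > 0" "2 * \<bar>a\<bar> + 1 \<le> real k * s"
  shows "real k \<le> 2 * (\<Sum>i\<in>I. if (\<Sum>j\<in>I-{i}. y j) \<le> a \<and> y i \<le> s then 1 else 0)"
proof -
  define C where "C = {i\<in>I. y i \<le> s}"
  define D where "D = I - C"
  have CI: "C \<subseteq> I" and fC: "finite C" and fD: "finite D" using I by (auto simp: C_def D_def)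
  have "real (card D) * s \<le> (\<Sum>i\<in>D. y i)"
  proof -
    have "\<And>i. i \<in> D \<Longrightarrow> s \<le> y i" by (auto simp: D_def C_def)
    from sum_bounded_below[of D s y, OF this] show ?thesis by (simp add: mult.commute)
  qed
  also have "\<dots> \<le> (\<Sum>i\<in>I. y i)"
    using I pos by (intro sum_mono2) (auto simp: D_def less_imp_le)
  also have "\<dots> < \<bar>a\<bar>" using sum by linarith
  finally have "2 * (real (card D) * s) < real k * s" using s by linarith
  then have Dk: "2 * real (card D) < real k" using s by (simp add: mult.assoc[symmetric])
  have "card C \<le> k" using I CI card_mono by blast
  then have "card C + card D = k" using I CI by (simp add: D_def card_Diff_subset fC)
  then have Ck: "real k < 2 * real (card C)" using Dk by linarith
  have "real (card C) = (\<Sum>i\<in>C. (if (\<Sum>j\<in>I-{i}. y j) \<le> a \<and> y i \<le> s then 1 else 0 :: real))"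
  proof -
    have "(\<Sum>i\<in>C. (if (\<Sum>j\<in>I-{i}. y j) \<le> a \<and> y i \<le> s then 1 else 0 :: real)) = (\<Sum>i\<in>C. 1)"
    proof (intro sum.cong refl)
      fix i assume i: "i \<in> C"
      have "(\<Sum>j\<in>I-{i}. y j) = (\<Sum>j\<in>I. y j) - y i" using I i by (simp add: C_def sum_diff1)
      also have "\<dots> \<le> a" using sum pos[of i] i by (simp add: C_def)
      finally show "(if (\<Sum>j\<in>I-{i}. y j) \<le> a \<and> y i \<le> s then 1 else 0 :: real) = 1" using i by (simp add: C_def)
    qed
    then show ?thesis by simp
  qed
  also have "\<dots> \<le> (\<Sum>i\<in>I. (if (\<Sum>j\<in>I-{i}. y j) \<le> a \<and> y i \<le> s then 1 else 0 :: real))"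
    using I CI by (intro sum_mono2) auto
  finally show ?thesis using Ck by linarith
qed

context setting2 begin

lemma triple_indep:
  assumes i: "i \<in> {2..k+1}" and B0: "B0 \<in> sets borel"
  shows "prob {\<omega>\<in>space M. X 1 \<omega> \<in> B0 \<and> (\<Sum>j\<in>{2..k+1}-{i}. Y j \<omega>) \<le> a \<and> Y i \<omega> \<le> t}
    = prob {\<omega>\<in>space M. X 1 \<omega> \<in> B0} * prob {\<omega>\<in>space M. (\<Sum>j\<in>{2..k+1}-{i}. Y j \<omega>) \<le> a} * Fy t"
proof -
  define I where "I = {2..k+1}"
  define Ls where "Ls = {0, 1, 2::nat}"
  define K where "K = (\<lambda>l::nat. if l = 0 then {Inl (1::nat)} else if l = 1 then Inr ` (I - {i}) else {Inr i})"
  define f where "f = (\<lambda>l::nat. \<lambda>u::nat+nat \<Rightarrow> real. if l = 0 then u (Inl 1) else if l = 1 then (\<Sum>j\<in>I-{i}. u (Inr j)) else u (Inr i))"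
  define B where "B = (\<lambda>l::nat. if l = 0 then B0 else if l = 1 then {..a} else {..t})"
  have fin: "finite Ls" "Ls \<noteq> {}" by (auto simp: Ls_def)
  have Kp: "\<And>l. l \<in> Ls \<Longrightarrow> K l \<subseteq> IS" using i by (auto simp: Ls_def K_def IS_def I_def)
  have disj: "disjoint_family_on K Ls" by (auto simp: disjoint_family_on_def K_def Ls_def)
  have fm: "f l \<in> borel_measurable (PiM (K l) (\<lambda>_. borel))" if "l \<in> Ls" for l
  proof -
    have "l = 0 \<or> l = 1 \<or> l = 2" using that by (auto simp: Ls_def)
    then show ?thesis
    proof (elim disjE)
      assume "l = 0" then show ?thesis by (simp add: f_def K_def)
    next
      assume l: "l = 1"
      have "(\<lambda>u::nat+nat \<Rightarrow> real. \<Sum>j\<in>I-{i}. u (Inr j)) \<in> borel_measurable (PiM (Inr ` (I - {i})) (\<lambda>_. borel))"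
        by (intro borel_measurable_sum measurable_component_singleton) auto
      then show ?thesis using l by (simp add: f_def K_def)
    next
      assume "l = 2" then show ?thesis by (simp add: f_def K_def)
    qed
  qed
  have Bm: "\<And>l. l \<in> Ls \<Longrightarrow> B l \<in> sets borel" using B0 by (auto simp: B_def)
  have e0: "f 0 (restrict (\<lambda>j. Z j \<omega>) (K 0)) = X 1 \<omega>" for \<omega> by (simp add: f_def K_def)
  have e1: "f 1 (restrict (\<lambda>j. Z j \<omega>) (K 1)) = (\<Sum>j\<in>I-{i}. Y j \<omega>)" for \<omega> by (simp add: f_def K_def)
  have e2: "f 2 (restrict (\<lambda>j. Z j \<omega>) (K 2)) = Y i \<omega>" for \<omega> by (simp add: f_def K_def)
  have "prob (\<Inter>l\<in>Ls. {\<omega>\<in>space M. f l (restrict (\<lambda>j. Z j \<omega>) (K l)) \<in> B l})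
      = (\<Prod>l\<in>Ls. prob {\<omega>\<in>space M. f l (restrict (\<lambda>j. Z j \<omega>) (K l)) \<in> B l})"
    by (rule indep_blocks_prob[OF Kp disj fin fm Bm])
  moreover have "(\<Inter>l\<in>Ls. {\<omega>\<in>space M. f l (restrict (\<lambda>j. Z j \<omega>) (K l)) \<in> B l})
      = {\<omega>\<in>space M. X 1 \<omega> \<in> B0 \<and> (\<Sum>j\<in>I-{i}. Y j \<omega>) \<le> a \<and> Y i \<omega> \<le> t}"
    unfolding Ls_def using e0 e1 e2 by (auto simp: B_def)
  moreover have "(\<Prod>l\<in>Ls. prob {\<omega>\<in>space M. f l (restrict (\<lambda>j. Z j \<omega>) (K l)) \<in> B l})
      = prob {\<omega>\<in>space M. X 1 \<omega> \<in> B0} * prob {\<omega>\<in>space M. (\<Sum>j\<in>I-{i}. Y j \<omega>) \<le> a} * prob {\<omega>\<in>space M. Y i \<omega> \<le> t}"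
    unfolding Ls_def using e0 e1 e2 by (simp add: B_def)
  moreover have "prob {\<omega>\<in>space M. Y i \<omega> \<le> t} = Fy t" using i by (intro FyY) auto
  ultimately show ?thesis by (simp add: I_def)
qed

end

context setting2 begin

definition "qq d k = prob {\<omega>\<in>space M. X 1 \<omega> > cc + d \<and> X 1 \<omega> + frakS Y k \<omega> \<le> L}"

lemma Ypos_AE: "2 \<le> j \<Longrightarrow> AE \<omega> in M. Y j \<omega> > 0"
proof -
  assume j: "2 \<le> j"
  have "prob {\<omega>\<in>space M. Y j \<omega> \<le> 0} = 0" using FyY[OF j, of 0] Fy0 by simp
  then show ?thesis
    using j by (subst AE_iff_measurable[where N="{\<omega>\<in>space M. Y j \<omega> \<le> 0}"]) (auto simp: emeasure_eq_measure not_less)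
qed

lemma ratio_bound:
  assumes d: "d > 0" and k: "k \<ge> 1" and Fd: "Fy (d/2) > 0"
  shows "qq d k \<le> 2 * Fy ((2 * \<bar>L - cc - d\<bar> + 1) / real k) / (prob {\<omega>\<in>space M. X 1 \<omega> \<le> cc + d/2} * Fy (d/2)) * rr k"
proof -
  define a where "a = L - cc - d"
  define s where "s = (2 * \<bar>a\<bar> + 1) / real k"
  define I where "I = {2..k+1}"
  define \<pi> where "\<pi> = prob {\<omega>\<in>space M. X 1 \<omega> \<le> cc + d/2}"
  have pi: "\<pi> > 0" unfolding \<pi>_def using d by (intro pi_pos) simp
  have s: "s > 0" "2 * \<bar>a\<bar> + 1 \<le> real k * s" using k by (auto simp: s_def)
  have I: "finite I" "card I = k" by (auto simp: I_def)
  let ?U = "\<lambda>i \<omega>. \<Sum>j\<in>I-{i}. Y j \<omega>"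
  define S where "S = (\<lambda>i. {\<omega>\<in>space M. ?U i \<omega> \<le> a \<and> Y i \<omega> \<le> s})"
  define E where "E = {\<omega>\<in>space M. X 1 \<omega> > cc + d \<and> X 1 \<omega> + frakS Y k \<omega> \<le> L}"
  have YmI: "\<And>j. j \<in> I \<Longrightarrow> Y j \<in> borel_measurable M" by (auto simp: I_def)
  have Sm: "S i \<in> sets M" if "i \<in> I" for i
  proof -
    have "(\<lambda>\<omega>. ?U i \<omega>) \<in> borel_measurable M" using YmI by (intro borel_measurable_sum) auto
    moreover have "Y i \<in> borel_measurable M" using YmI that by auto
    ultimately show ?thesis unfolding S_def by measurable
  qed
  have Em: "E \<in> sets M" unfolding E_def by measurable
  have AEpos: "AE \<omega> in M. \<forall>j\<in>I. Y j \<omega> > 0"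
    using I(1) by (rule AE_finite_allI) (auto simp: I_def intro: Ypos_AE)
  have pw: "AE \<omega> in M. indicator E \<omega> \<le> (2 / real k) * (\<Sum>i\<in>I. indicator (S i) \<omega> :: real)"
    using AEpos
  proof (eventually_elim)
    case (elim \<omega>)
    show ?case
    proof (cases "\<omega> \<in> E")
      case False
      have "0 \<le> (\<Sum>i\<in>I. indicator (S i) \<omega> :: real)" by (intro sum_nonneg) auto
      then show ?thesis using False by simp
    next
      case True
      then have sp: "\<omega> \<in> space M" and lt: "(\<Sum>i\<in>I. Y i \<omega>) < a"
        by (auto simp: E_def a_def frakS_def I_def)
      have "real k \<le> 2 * (\<Sum>i\<in>I. if (\<Sum>j\<in>I-{i}. Y j \<omega>) \<le> a \<and> Y i \<omega> \<le> s then 1 else 0)"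
        using I elim lt s by (intro markov_count) auto
      also have "(\<Sum>i\<in>I. if (\<Sum>j\<in>I-{i}. Y j \<omega>) \<le> a \<and> Y i \<omega> \<le> s then 1 else 0) = (\<Sum>i\<in>I. indicator (S i) \<omega> :: real)"
        using sp by (intro sum.cong refl) (auto simp: S_def)
      finally show ?thesis using True k by (simp add: field_simps)
    qed
  qed
  have "qq d k = integral\<^sup>L M (indicator E)" using Em by (simp add: qq_def E_def)
  also have "\<dots> \<le> integral\<^sup>L M (\<lambda>\<omega>. (2 / real k) * (\<Sum>i\<in>I. indicator (S i) \<omega> :: real))"
  proof (rule integral_mono_AE[OF _ _ pw])
    show "integrable M (indicator E :: 'a \<Rightarrow> real)"
      using Em by (intro integrable_real_indicator) (auto simp: emeasure_eq_measure)
    show "integrable M (\<lambda>\<omega>. (2 / real k) * (\<Sum>i\<in>I. indicator (S i) \<omega> :: real))"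
      using Sm by (intro integrable_mult_right integrable_sum integrable_real_indicator) (auto simp: emeasure_eq_measure)
  qed
  also have "\<dots> = (2 / real k) * (\<Sum>i\<in>I. measure M (S i))"
  proof -
    have "integral\<^sup>L M (\<lambda>\<omega>. \<Sum>i\<in>I. indicator (S i) \<omega> :: real) = (\<Sum>i\<in>I. integral\<^sup>L M (indicator (S i) :: 'a \<Rightarrow> real))"
      by (rule Bochner_Integration.integral_sum[where f="\<lambda>i. indicator (S i) :: 'a \<Rightarrow> real"]) (use Sm in \<open>auto simp: emeasure_eq_measure\<close>)
    also have "\<dots> = (\<Sum>i\<in>I. measure M (S i))"
      using Sm by (intro sum.cong refl) (simp add: Int_absorb2 sets.sets_into_space)
    finally show ?thesis by simp
  qed
  also have "\<dots> \<le> (2 / real k) * (\<Sum>i\<in>I. Fy s * (rr k / (\<pi> * Fy (d/2))))"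
  proof (intro mult_left_mono sum_mono)
    fix i assume i: "i \<in> I"
    have iI: "i \<in> {2..k+1}" using i by (simp add: I_def)
    have "measure M (S i) = prob {\<omega>\<in>space M. X 1 \<omega> \<in> UNIV \<and> ?U i \<omega> \<le> a \<and> Y i \<omega> \<le> s}"
      by (simp add: S_def)
    also have "\<dots> = prob {\<omega>\<in>space M. ?U i \<omega> \<le> a} * Fy s"
      using triple_indep[OF iI, of UNIV a s] by (simp add: I_def prob_space)
    finally have S_eq: "measure M (S i) = prob {\<omega>\<in>space M. ?U i \<omega> \<le> a} * Fy s" .
    have "\<pi> * prob {\<omega>\<in>space M. ?U i \<omega> \<le> a} * Fy (d/2) = prob {\<omega>\<in>space M. X 1 \<omega> \<in> {..cc + d/2} \<and> ?U i \<omega> \<le> a \<and> Y i \<omega> \<le> d/2}"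
      using triple_indep[OF iI, of "{..cc + d/2}" a "d/2"] by (simp add: I_def \<pi>_def)
    also have "\<dots> \<le> rr k"
      unfolding rr_def
    proof (intro finite_measure_mono)
      show "{\<omega>\<in>space M. X 1 \<omega> \<in> {..cc + d/2} \<and> ?U i \<omega> \<le> a \<and> Y i \<omega> \<le> d/2} \<subseteq> {\<omega>\<in>space M. X 1 \<omega> + frakS Y k \<omega> \<le> L}"
      proof
        fix \<omega> assume "\<omega> \<in> {\<omega>\<in>space M. X 1 \<omega> \<in> {..cc + d/2} \<and> ?U i \<omega> \<le> a \<and> Y i \<omega> \<le> d/2}"
        then have w: "\<omega> \<in> space M" "X 1 \<omega> \<le> cc + d/2" "?U i \<omega> \<le> a" "Y i \<omega> \<le> d/2" by auto
        have "frakS Y k \<omega> = ?U i \<omega> + Y i \<omega>"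
          using i I(1) by (simp add: frakS_def I_def sum_diff1)
        then show "\<omega> \<in> {\<omega>\<in>space M. X 1 \<omega> + frakS Y k \<omega> \<le> L}" using w by (simp add: a_def)
      qed
    qed (simp add: rr_def)
    finally have "\<pi> * prob {\<omega>\<in>space M. ?U i \<omega> \<le> a} * Fy (d/2) \<le> rr k" .
    then have "prob {\<omega>\<in>space M. ?U i \<omega> \<le> a} \<le> rr k / (\<pi> * Fy (d/2))"
      using pi Fd by (simp add: field_simps)
    then show "measure M (S i) \<le> Fy s * (rr k / (\<pi> * Fy (d/2)))"
    proof -
      have "0 \<le> Fy s" using Fy_mono[of 0 s] Fy0 s by simp
      from mult_left_mono[OF \<open>prob {\<omega>\<in>space M. ?U i \<omega> \<le> a} \<le> rr k / (\<pi> * Fy (d/2))\<close> this]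
      show ?thesis unfolding S_eq by (simp add: mult.commute)
    qed
  qed simp
  also have "\<dots> = 2 * Fy s / (\<pi> * Fy (d/2)) * rr k" using k I by (simp add: field_simps)
  finally show ?thesis by (simp add: s_def a_def \<pi>_def)
qed

end

lemma binom_ratio_nat:
  assumes kK: "k < K" and Km: "K \<le> m"
  shows "real (m choose k) * real m \<le> real K ^ K * real (m choose K)"
proof -
  have m1: "m \<ge> 1" using kK Km by simp
  have "real (m choose k) * real m \<le> real m ^ k * real m"
    using binomial_le_pow[of k m] kK Km by (intro mult_right_mono) (simp_all add: of_nat_power[symmetric] del: of_nat_power)
  also have "\<dots> = real m ^ (k + 1)" by simp
  also have "\<dots> \<le> real m ^ K" using m1 kK by (intro power_increasing) auto
  also have "\<dots> = real K ^ K * (real m / real K) ^ K" using kK by (simp add: power_divide)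
  also have "\<dots> \<le> real K ^ K * real (m choose K)"
    using binomial_ge_n_over_k_pow_k[OF Km, where 'a=real] by (intro mult_left_mono) auto
  finally show ?thesis .
qed

context setting begin

lemma acoef_small:
  assumes kK: "k < K" and c: "c > 0"
  shows "eventually (\<lambda>n. acoef n k \<le> c * acoef n K) sequentially"
proof (cases "pp = 1")
  case True
  have "acoef n k \<le> c * acoef n K" if "n \<ge> k + 2" for n
  proof -
    have "acoef n k = 0" using that True by (simp add: acoef_def)
    then show ?thesis using acoef_nonneg[of n K] c by simp
  qed
  then show ?thesis unfolding eventually_sequentially by blast
next
  case False
  then have p: "0 < pp" "pp < 1" using pp_pos pp_le1 by auto
  define D where "D = (1 - pp) ^ (K - k) / pp ^ (K - k)"
  have D: "D \<ge> 0" using p by (simp add: D_def)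
  obtain N :: nat where N: "real K ^ K * D / c < real N" using reals_Archimedean2 by blast
  have "acoef n k \<le> c * acoef n K" if n: "n \<ge> N + K + 1" for n
  proof -
    define m where "m = n - 1"
    have Km: "K \<le> m" and Nm: "N \<le> m" using n by (auto simp: m_def)
    have m1: "real m > 0" using Km kK by simp
    have pw: "(1-pp) ^ (m-k) * pp ^ k = ((1-pp) ^ (m-K) * pp ^ K) * D"
    proof -
      have "(1-pp) ^ (m-k) = (1-pp) ^ (m-K) * (1-pp) ^ (K-k)"
        using Km kK by (simp add: power_add[symmetric])
      moreover have "pp ^ K = pp ^ k * pp ^ (K-k)" using kK by (simp add: power_add[symmetric])
      ultimately show ?thesis using p by (simp add: D_def field_simps)
    qed
    have "acoef n k * real m = real (m choose k) * real m * ((1-pp) ^ (m-k) * pp ^ k)"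
      by (simp add: acoef_def m_def mult_ac)
    also have "\<dots> \<le> real K ^ K * real (m choose K) * ((1-pp) ^ (m-k) * pp ^ k)"
      using binom_ratio_nat[OF kK Km] p by (intro mult_right_mono) auto
    also have "\<dots> = real K ^ K * D * acoef n K"
      unfolding pw by (simp add: acoef_def m_def mult_ac)
    finally have "acoef n k * real m \<le> real K ^ K * D * acoef n K" .
    moreover have "real K ^ K * D * acoef n K \<le> c * real m * acoef n K"
    proof (intro mult_right_mono acoef_nonneg)
      have "real K ^ K * D < c * real N" using N c by (simp add: field_simps)
      also have "\<dots> \<le> c * real m" using Nm c by simp
      finally show "real K ^ K * D \<le> c * real m" by simp
    qed
    ultimately have "acoef n k * real m \<le> (c * acoef n K) * real m" by (simp add: mult_ac)
    then show ?thesis using m1 by simp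
  qed
  then show ?thesis unfolding eventually_sequentially by blast
qed

lemma acoef_pos: "pp < 1 \<Longrightarrow> K \<le> n - 1 \<Longrightarrow> acoef n K > 0"
  using pp_pos by (simp add: acoef_def)

lemma acoef_ratio_lim:
  assumes kK: "k < K" and p: "pp < 1"
  shows "(\<lambda>n. acoef n k / acoef n K) \<longlonglongrightarrow> 0"
proof (rule order_tendstoI)
  fix a :: real assume "a < 0"
  moreover have "eventually (\<lambda>n. 0 \<le> acoef n k / acoef n K) sequentially"
    using acoef_nonneg by (auto intro!: divide_nonneg_nonneg)
  ultimately show "eventually (\<lambda>n. a < acoef n k / acoef n K) sequentially"
    by (auto elim: eventually_mono)
next
  fix a :: real assume a: "a > 0"
  have "eventually (\<lambda>n. acoef n k \<le> (a/2) * acoef n K \<and> n \<ge> K + 1) sequentially"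
    using acoef_small[OF kK, of "a/2"] a eventually_ge_at_top[of "K+1"] by (auto intro: eventually_conj)
  then show "eventually (\<lambda>n. acoef n k / acoef n K < a) sequentially"
  proof (rule eventually_mono)
    fix n assume n: "acoef n k \<le> (a/2) * acoef n K \<and> n \<ge> K + 1"
    have pos: "acoef n K > 0" using n p by (intro acoef_pos) auto
    have "acoef n k / acoef n K \<le> a/2" using n pos by (simp add: divide_le_eq)
    then show "acoef n k / acoef n K < a" using a by linarith
  qed
qed

end

context setting2 begin

lemma qq_nonneg: "qq d k \<ge> 0" by (simp add: qq_def)
lemma qq_le_rr: "qq d k \<le> rr k"
  unfolding qq_def rr_def by (intro finite_measure_mono) auto
lemma qq_le1: "qq d k \<le> 1" by (simp add: qq_def)

lemma PE_eq: "1 \<le> n \<Longrightarrow> prob {\<omega>\<in>space M. X 1 \<omega> > cc + d \<and> partS X n \<omega> \<le> L} = (\<Sum>k\<le>n-1. acoef n k * qq d k)"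
  using decomp[of n "{cc+d<..}"] by (simp add: qq_def)

lemma PS_eq: "1 \<le> n \<Longrightarrow> prob {\<omega>\<in>space M. partS X n \<omega> \<le> L} = (\<Sum>k\<le>n-1. acoef n k * rr k)"
  using decomp[of n UNIV] by (simp add: rr_def)

lemma cp_eq: "cond_prob M (\<lambda>\<omega>. X 1 \<omega> > lower_end M (X 1) + d) (\<lambda>\<omega>. partS X n \<omega> \<le> L)
   = prob {\<omega>\<in>space M. X 1 \<omega> > cc + d \<and> partS X n \<omega> \<le> L} / prob {\<omega>\<in>space M. partS X n \<omega> \<le> L}"
  by (simp add: cond_prob_def cc_def)

lemma case_inf:
  assumes inf: "Kstar M X Y L = \<infinity>" and d: "d > 0"
  shows "(\<lambda>n. cond_prob M (\<lambda>\<omega>. X 1 \<omega> > lower_end M (X 1) + d) (\<lambda>\<omega>. partS X n \<omega> \<le> L)) \<longlonglongrightarrow> 0"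
proof -
  have Fp: "\<And>t. t > 0 \<Longrightarrow> Fy t > 0" by (rule Kinf_Fpos[OF inf])
  have rp: "\<And>k. rr k > 0" by (rule Fpos_rr[OF Fp])
  define \<pi> where "\<pi> = prob {\<omega>\<in>space M. X 1 \<omega> \<le> cc + d/2}"
  define C0 where "C0 = 2 / (\<pi> * Fy (d/2))"
  define A where "A = 2 * \<bar>L - cc - d\<bar> + 1"
  have pi: "\<pi> > 0" unfolding \<pi>_def using d by (intro pi_pos) simp
  have F2: "Fy (d/2) > 0" using Fp d by simp
  have C0: "C0 > 0" using pi F2 by (simp add: C0_def)
  have A: "A > 0" unfolding A_def by (intro add_nonneg_pos) simp_all
  have rb: "qq d k \<le> C0 * Fy (A / real k) * rr k" if "k \<ge> 1" for k
    using ratio_bound[OF d that F2] by (simp add: C0_def A_def \<pi>_def)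
  let ?PE = "\<lambda>n. prob {\<omega>\<in>space M. X 1 \<omega> > cc + d \<and> partS X n \<omega> \<le> L}"
  let ?PS = "\<lambda>n. prob {\<omega>\<in>space M. partS X n \<omega> \<le> L}"
  show ?thesis unfolding cp_eq
  proof (rule order_tendstoI)
    fix a :: real assume "a < 0"
    then show "eventually (\<lambda>n. a < ?PE n / ?PS n) sequentially"
      by (auto intro!: always_eventually divide_nonneg_nonneg intro: less_le_trans)
  next
    fix e :: real assume e: "e > 0"
    have "eventually (\<lambda>m. Fy (1 / (real m + 1)) < e / (4 * C0)) sequentially"
      using Fy_lim e C0 by (intro order_tendstoD) auto
    then obtain m0 where m0: "Fy (1 / (real m0 + 1)) < e / (4 * C0)" by (auto dest: eventually_happens)
    define k0 where "k0 = nat \<lceil>A * (real m0 + 1)\<rceil> + 1"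
    have k01: "k0 \<ge> 1" by (simp add: k0_def)
    have big: "qq d k \<le> (e/4) * rr k" if k: "k \<ge> k0" for k
    proof -
      have k1: "k \<ge> 1" using k k01 by simp
      have "A * (real m0 + 1) \<le> real k" using k unfolding k0_def by linarith
      then have "A / real k \<le> 1 / (real m0 + 1)" using k1 by (simp add: field_simps)
      then have "Fy (A / real k) \<le> Fy (1 / (real m0 + 1))" by (rule Fy_mono)
      then have "C0 * Fy (A / real k) \<le> C0 * (e / (4 * C0))" using m0 C0 by (intro mult_left_mono) auto
      also have "\<dots> = e/4" using C0 by simp
      finally have "C0 * Fy (A / real k) * rr k \<le> (e/4) * rr k" using rr_nonneg by (intro mult_right_mono) auto
      then show ?thesis using rb[OF k1] by linarith
    qed
    define c where "c = e * rr k0 / (4 * real k0)"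
    have c: "c > 0" using e rp[of k0] k01 by (simp add: c_def)
    have ev: "eventually (\<lambda>n. (\<forall>k\<in>{..<k0}. acoef n k \<le> c * acoef n k0) \<and> n \<ge> k0 + 1) sequentially"
      by (intro eventually_conj eventually_ball_finite ballI acoef_small c eventually_ge_at_top) auto
    then show "eventually (\<lambda>n. ?PE n / ?PS n < e) sequentially"
    proof (rule eventually_mono)
      fix n assume n: "(\<forall>k\<in>{..<k0}. acoef n k \<le> c * acoef n k0) \<and> n \<ge> k0 + 1"
      have n1: "1 \<le> n" using n by simp
      have k0n: "k0 \<in> {..n-1}" using n by auto
      have PSnn: "?PS n \<ge> 0" by simp
      have "?PE n = (\<Sum>k\<le>n-1. acoef n k * qq d k)" by (rule PE_eq[OF n1])
      also have "\<dots> \<le> (\<Sum>k\<le>n-1. (if k < k0 then acoef n k else 0) + (e/4) * (acoef n k * rr k))"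
      proof (intro sum_mono)
        fix k assume "k \<in> {..n-1}"
        show "acoef n k * qq d k \<le> (if k < k0 then acoef n k else 0) + (e/4) * (acoef n k * rr k)"
        proof (cases "k < k0")
          case True
          have "acoef n k * qq d k \<le> acoef n k * 1" using qq_le1 acoef_nonneg by (intro mult_left_mono) auto
          moreover have "0 \<le> (e/4) * (acoef n k * rr k)" using e acoef_nonneg rr_nonneg by simp
          ultimately show ?thesis using True by simp
        next
          case False
          have "acoef n k * qq d k \<le> acoef n k * ((e/4) * rr k)"
            using big[of k] False acoef_nonneg by (intro mult_left_mono) auto
          then show ?thesis using False by (simp add: mult_ac)
        qed
      qed
      also have "\<dots> = (\<Sum>k<k0. acoef n k) + (e/4) * ?PS n"
      proof -
        have "(\<Sum>k\<le>n-1. (if k < k0 then acoef n k else 0)) = (\<Sum>k\<in>{..n-1} \<inter> {k. k < k0}. acoef n k)"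
          by (simp add: sum.If_cases)
        also have "{..n-1} \<inter> {k. k < k0} = {..<k0}" using n by auto
        finally have 1: "(\<Sum>k\<le>n-1. (if k < k0 then acoef n k else 0)) = (\<Sum>k<k0. acoef n k)" .
        have 2: "(\<Sum>k\<le>n-1. (e/4) * (acoef n k * rr k)) = (e/4) * ?PS n"
          by (simp only: sum_distrib_left[symmetric] PS_eq[OF n1])
        show ?thesis by (simp only: sum.distrib 1 2)
      qed
      also have "(\<Sum>k<k0. acoef n k) \<le> (\<Sum>k<k0. c * acoef n k0)"
        using n by (intro sum_mono) auto
      also have "(\<Sum>k<k0. c * acoef n k0) = (e/4) * (acoef n k0 * rr k0)"
        using k01 by (simp add: c_def)
      also have "acoef n k0 * rr k0 \<le> ?PS n"
      proof -
        have "acoef n k0 * rr k0 \<le> (\<Sum>k\<le>n-1. acoef n k * rr k)"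
          using k0n by (intro member_le_sum) (auto intro!: mult_nonneg_nonneg acoef_nonneg rr_nonneg)
        then show ?thesis using PS_eq[OF n1] by simp
      qed
      finally have "?PE n \<le> (e/4) * ?PS n + (e/4) * ?PS n" using e by (simp add: mult_left_mono)
      then have PEb: "?PE n \<le> (e/2) * ?PS n" by simp
      show "?PE n / ?PS n < e"
      proof (cases "?PS n = 0")
        case True then show ?thesis using e by simp
      next
        case False
        then have "?PS n > 0" using PSnn by linarith
        then have "?PE n / ?PS n \<le> e/2" using PEb by (simp add: divide_le_eq)
        then show ?thesis using e by linarith
      qed
    qed
  qed
qed

end

context setting2 begin

lemma case_fin:
  assumes K: "Kstar M X Y L = enat K" and d: "d > 0"
  shows "(\<lambda>n. cond_prob M (\<lambda>\<omega>. X 1 \<omega> > lower_end M (X 1) + d) (\<lambda>\<omega>. partS X n \<omega> \<le> L)) \<longlonglongrightarrow>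
            cond_prob M (\<lambda>\<omega>. X 1 \<omega> > lower_end M (X 1) + d) (\<lambda>\<omega>. X 1 \<omega> + frakS Y K \<omega> \<le> L)"
proof -
  have K1: "K \<ge> 1" and rK: "rr K > 0" and rz: "\<And>k. k > K \<Longrightarrow> rr k = 0" using Kstar_fin[OF K] by auto
  have qz: "qq d k = 0" if "k > K" for k using qq_nonneg[of d k] qq_le_rr[of d k] rz[OF that] by simp
  have p1: "pp < 1"
  proof (rule ccontr)
    assume "\<not> pp < 1"
    then have "pp = 1" using pp_le1 by simp
    then have "Kstar M X Y L = \<infinity>" using all_pos_inf Fpos_rr p1_Fpos by blast
    with K show False by simp
  qed
  let ?PE = "\<lambda>n. prob {\<omega>\<in>space M. X 1 \<omega> > cc + d \<and> partS X n \<omega> \<le> L}"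
  let ?PS = "\<lambda>n. prob {\<omega>\<in>space M. partS X n \<omega> \<le> L}"
  define g where "g = (\<lambda>n. (qq d K + (\<Sum>k<K. (acoef n k / acoef n K) * qq d k)) / (rr K + (\<Sum>k<K. (acoef n k / acoef n K) * rr k)))"
  have h: "(\<lambda>n. (acoef n k / acoef n K) * c) \<longlonglongrightarrow> 0" if "k < K" for k c
    using tendsto_mult[OF acoef_ratio_lim[OF that p1] tendsto_const[of c]] by simp
  have lim: "g \<longlonglongrightarrow> (qq d K + 0) / (rr K + 0)"
    unfolding g_def
    by (intro tendsto_divide tendsto_add tendsto_const tendsto_null_sum h) (use rK in auto)
  have "eventually (\<lambda>n. g n = ?PE n / ?PS n) sequentially"
    using eventually_ge_at_top[of "K+1"]
  proof (rule eventually_mono)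
    fix n assume n: "K + 1 \<le> n"
    have n1: "1 \<le> n" using n by simp
    have aK: "acoef n K > 0" using n p1 by (intro acoef_pos) auto
    have split: "(\<Sum>k\<le>n-1. acoef n k * f k) = acoef n K * f K + (\<Sum>k<K. acoef n k * f k)"
      if fz: "\<And>k. k > K \<Longrightarrow> f k = 0" for f
    proof -
      have "(\<Sum>k\<le>n-1. acoef n k * f k) = (\<Sum>k\<le>K. acoef n k * f k)"
        using n fz by (intro sum.mono_neutral_right) auto
      also have "\<dots> = acoef n K * f K + (\<Sum>k<K. acoef n k * f k)"
        by (simp add: lessThan_Suc_atMost[symmetric])
      finally show ?thesis .
    qed
    have e1: "?PE n = acoef n K * qq d K + (\<Sum>k<K. acoef n k * qq d k)"
      using PE_eq[OF n1] split[of "qq d", OF qz] by simp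
    have e2: "?PS n = acoef n K * rr K + (\<Sum>k<K. acoef n k * rr k)"
      using PS_eq[OF n1] split[of rr, OF rz] by simp
    have s1: "(\<Sum>k<K. (acoef n k / acoef n K) * qq d k) = (\<Sum>k<K. acoef n k * qq d k) / acoef n K"
      by (simp add: sum_divide_distrib)
    have s2: "(\<Sum>k<K. (acoef n k / acoef n K) * rr k) = (\<Sum>k<K. acoef n k * rr k) / acoef n K"
      by (simp add: sum_divide_distrib)
    have "g n = (qq d K + (\<Sum>k<K. acoef n k * qq d k) / acoef n K) / (rr K + (\<Sum>k<K. acoef n k * rr k) / acoef n K)"
      unfolding g_def s1 s2 ..
    also have "\<dots> = (acoef n K * qq d K + (\<Sum>k<K. acoef n k * qq d k)) / (acoef n K * rr K + (\<Sum>k<K. acoef n k * rr k))"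
    proof -
      have gen: "(q + S / a) / (r + T / a) = (a * q + S) / (a * r + T)" if a: "a > 0" for q S r T a :: real
      proof -
        have "q + S / a = (a * q + S) / a" "r + T / a = (a * r + T) / a" using a by (simp_all add: field_simps)
        moreover have "((a * q + S) / a) / ((a * r + T) / a) = (a * q + S) / (a * r + T)"
        proof -
          have "((a * q + S) / a) / ((a * r + T) / a) = (a * q + S) * (inverse a * a) * inverse (a * r + T)"
            by (simp add: divide_inverse inverse_mult_distrib mult_ac)
          also have "inverse a * a = 1" using a by simp
          finally show ?thesis by (simp add: divide_inverse)
        qed
        ultimately show ?thesis by simp
      qed
      show ?thesis by (rule gen[OF aK])
    qed
    finally show "g n = ?PE n / ?PS n" using e1 e2 by simp
  qed
  with lim have "(\<lambda>n. ?PE n / ?PS n) \<longlonglongrightarrow> qq d K / rr K"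
    by (simp add: Lim_transform_eventually)
  moreover have "qq d K / rr K = cond_prob M (\<lambda>\<omega>. X 1 \<omega> > lower_end M (X 1) + d) (\<lambda>\<omega>. X 1 \<omega> + frakS Y K \<omega> \<le> L)"
    by (simp add: qq_def rr_def cond_prob_def cc_def)
  ultimately show ?thesis unfolding cp_eq by simp
qed

theorem main:
  shows "(Kstar M X Y L = \<infinity> \<longrightarrow> (\<forall>\<delta>>0.
            (\<lambda>n. cond_prob M (\<lambda>\<omega>. X 1 \<omega> > lower_end M (X 1) + \<delta>)
                              (\<lambda>\<omega>. partS X n \<omega> \<le> L)) \<longlonglongrightarrow> 0))
       \<and> (\<forall>K::nat. Kstar M X Y L = enat K \<longrightarrow> (\<forall>\<delta>>0.
            (\<lambda>n. cond_prob M (\<lambda>\<omega>. X 1 \<omega> > lower_end M (X 1) + \<delta>)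
                              (\<lambda>\<omega>. partS X n \<omega> \<le> L)) \<longlonglongrightarrow>
            cond_prob M (\<lambda>\<omega>. X 1 \<omega> > lower_end M (X 1) + \<delta>)
                        (\<lambda>\<omega>. X 1 \<omega> + frakS Y K \<omega> \<le> L)))"
  using case_inf case_fin by blast

end

theorem theoremA2:
  fixes M :: "'a measure" and X Y :: "nat \<Rightarrow> 'a \<Rightarrow> real" and L :: real
  assumes "prob_space M"
    and indep: "prob_space.indep_vars M (\<lambda>_. borel)
          (\<lambda>i. case i of Inl k \<Rightarrow> X k | Inr k \<Rightarrow> Y k)
          (Inl ` {1..} \<union> Inr ` {2..})"
    and nonneg: "\<And>k \<omega>. k \<ge> 1 \<Longrightarrow> \<omega> \<in> space M \<Longrightarrow> X k \<omega> \<ge> 0"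
    and X_id: "\<And>k. k \<ge> 2 \<Longrightarrow> distr M borel (X k) = distr M borel (X 2)"
    and p_pos: "measure M {\<omega> \<in> space M. X 2 \<omega> > 0} > 0"
    and Y_id: "\<And>k. k \<ge> 2 \<Longrightarrow> distr M borel (Y k) = distr M borel (Y 2)"
    and Y_law: "\<And>k U. k \<ge> 2 \<Longrightarrow> U \<in> sets borel \<Longrightarrow>
          measure M {\<omega> \<in> space M. Y k \<omega> \<in> U} =
          cond_prob M (\<lambda>\<omega>. X k \<omega> \<in> U) (\<lambda>\<omega>. X k \<omega> > 0)"
    and I2: "lower_end M (X 2) = 0"
    and L_pos: "L > 0"
    and L_prob: "measure M {\<omega> \<in> space M. X 1 \<omega> + Y 2 \<omega> \<le> L} > 0"
  shows "(Kstar M X Y L = \<infinity> \<longrightarrow> (\<forall>\<delta>>0.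
            (\<lambda>n. cond_prob M (\<lambda>\<omega>. X 1 \<omega> > lower_end M (X 1) + \<delta>)
                              (\<lambda>\<omega>. partS X n \<omega> \<le> L)) \<longlonglongrightarrow> 0))
       \<and> (\<forall>K::nat. Kstar M X Y L = enat K \<longrightarrow> (\<forall>\<delta>>0.
            (\<lambda>n. cond_prob M (\<lambda>\<omega>. X 1 \<omega> > lower_end M (X 1) + \<delta>)
                              (\<lambda>\<omega>. partS X n \<omega> \<le> L)) \<longlonglongrightarrow>
            cond_prob M (\<lambda>\<omega>. X 1 \<omega> > lower_end M (X 1) + \<delta>)
                        (\<lambda>\<omega>. X 1 \<omega> + frakS Y K \<omega> \<le> L)))"
proof -
  have S: "setting2 M X Y L"
    by (intro setting2.intro setting.intro setting2_axioms.intro setting_axioms.intro) (fact assms)+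
  interpret setting2 M X Y L by (fact S)
  show ?thesis by (rule main)
qed

end
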